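(* Fix $\mathcal F\in\{\mathcal P,\mathcal A,\mathcal P\cap\mathcal A'\}$. The output differential entropy $$h(Y)=-\int\!\!\int p(r,\phi;F_0)\ln p(r,\phi;F_0)\,dr\,d\phi,\qquad p(r,\phi;F_0)=\int p(r,\phi\mid r_0,\phi_0)\,dF_0(r_0,\phi_0),$$ is a continuous function of the joint input cdf $F_0$ of $(R_0,\Phi_0)$ with respect to weak convergence, on the set of $F_0$ whose amplitude marginal lies in $\mathcal F$.
   Context: Fix constants $\gamma>0$, $\sigma>0$, $\mathcal L>0$, and let $j=\sqrt{-1}$. For $m\in\mathbb N$ let $$a_m=\frac{\sqrt{jm\gamma}}{\sigma}\coth\!\big(\sqrt{jm\gamma\sigma^2}\,\mathcal L\big),\qquad b_m=\frac{\sqrt{jm\gamma}}{\sigma}\,\frac{1}{\sinh\!\big(\sqrt{jm\gamma\sigma^2}\,\mathcal L\big)},$$ with principal square roots. $I_m$ denotes the modified Bessel function of the first kind of order $m$. The PZD channel conditional density (input polar coordinates $(r_0,\phi_0)$, output polar coordinates $(r,\phi)$) is $$p(r,\phi\mid r_0,\phi_0)=\frac{1}{2\pi}p_{R|R_0}(r\mid r_0)+\frac1\pi\sum_{m\ge1}\Re\!\Big(C_m(r,r_0)\,e^{jm(\phi-\phi_0-\gamma r_0^2\mathcal L)}\Big),$$ where $$p_{R|R_0}(r\mid r_0)=\frac{2r}{\sigma^2\mathcal L}e^{-\frac{r^2+r_0^2}{\sigma^2\mathcal L}}I_0\!\Big(\frac{2rr_0}{\sigma^2\mathcal L}\Big),\qquad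 C_m(r,r_0)=r\,b_m\,e^{-a_m(r^2+r_0^2)}I_m(2b_m r_0 r).$$ Constraints. Fix $0<\rho<\infty$ and $0<A<\infty$. A function $\mathcal C:[0,\infty)\to[0,\infty)$ is an admissible cost if it satisfies two conditions: - (C1) it is lower semicontinuous and non-decreasing, with $\mathcal C(0)=0$ and $\lim_{r_0\to\infty}\mathcal C(r_0)=\infty$; - (C2) it extends analytically to a strip $\{z\in\mathbb C:|\Im z|<\delta\}$ for some $\delta>0$. The three sets of cdfs $F_{R_0}$ of $R_0$ are: - $\mathcal P=\{F_{R_0}:\int_0^\rho dF_{R_0}=1\}$; - $\mathcal A=\{F_{R_0}:\int_0^\infty\mathcal C\,dF_{R_0}\le A\}$ for an admissible cost with $\mathcal C(r_0)/r_0^2\to\infty$; - $\mathcal A'$, defined like $\mathcal A$ but with admissible $\mathcal C$ satisfying $\mathcal C(r_0)/\ln r_0\to\infty$. *)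

theory Defs
  imports "HOL-Analysis.Analysis" "HOL-Probability.Probability"
begin

definition besselI :: "nat \<Rightarrow> complex \<Rightarrow> complex" where
  "besselI m z = (\<Sum>k. (z / 2) ^ (2 * k + m) / (of_nat (fact k) * of_nat (fact (k + m))))"

definition coth_c :: "complex \<Rightarrow> complex" where
  "coth_c z = cosh z / sinh z"

definition a_coef :: "real \<Rightarrow> real \<Rightarrow> real \<Rightarrow> nat \<Rightarrow> complex" where
  "a_coef \<gamma> \<sigma> L m =
     csqrt (\<i> * of_nat m * of_real \<gamma>) / of_real \<sigma>
       * coth_c (csqrt (\<i> * of_nat m * of_real \<gamma> * of_real (\<sigma>\<^sup>2)) * of_real L)"

definition b_coef :: "real \<Rightarrow> real \<Rightarrow> real \<Rightarrow> nat \<Rightarrow> complex" where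
  "b_coef \<gamma> \<sigma> L m =
     csqrt (\<i> * of_nat m * of_real \<gamma>) / of_real \<sigma>
       / sinh (csqrt (\<i> * of_nat m * of_real \<gamma> * of_real (\<sigma>\<^sup>2)) * of_real L)"

definition C_coef :: "real \<Rightarrow> real \<Rightarrow> real \<Rightarrow> nat \<Rightarrow> real \<Rightarrow> real \<Rightarrow> complex" where
  "C_coef \<gamma> \<sigma> L m r r0 =
     of_real r * b_coef \<gamma> \<sigma> L m * exp (- a_coef \<gamma> \<sigma> L m * of_real (r\<^sup>2 + r0\<^sup>2))
       * besselI m (2 * b_coef \<gamma> \<sigma> L m * of_real r0 * of_real r)"

definition pR :: "real \<Rightarrow> real \<Rightarrow> real \<Rightarrow> real \<Rightarrow> real" where
  "pR \<sigma> L r r0 =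
     2 * r / (\<sigma>\<^sup>2 * L) * exp (- (r\<^sup>2 + r0\<^sup>2) / (\<sigma>\<^sup>2 * L))
       * Re (besselI 0 (of_real (2 * r * r0 / (\<sigma>\<^sup>2 * L))))"

definition pzd_cond :: "real \<Rightarrow> real \<Rightarrow> real \<Rightarrow> real \<Rightarrow> real \<Rightarrow> real \<Rightarrow> real \<Rightarrow> real" where
  "pzd_cond \<gamma> \<sigma> L r \<phi> r0 \<phi>0 =
     pR \<sigma> L r r0 / (2 * pi)
     + (1 / pi) * (\<Sum>k. Re (C_coef \<gamma> \<sigma> L (Suc k) r r0
            * exp (\<i> * of_nat (Suc k) * of_real (\<phi> - \<phi>0 - \<gamma> * r0\<^sup>2 * L))))"

definition out_density :: "real \<Rightarrow> real \<Rightarrow> real \<Rightarrow> (real \<times> real) measure \<Rightarrow> real \<Rightarrow> real \<Rightarrow> real" where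
  "out_density \<gamma> \<sigma> L F0 r \<phi> = (\<integral>x. pzd_cond \<gamma> \<sigma> L r \<phi> (fst x) (snd x) \<partial>F0)"

definition out_entropy :: "real \<Rightarrow> real \<Rightarrow> real \<Rightarrow> (real \<times> real) measure \<Rightarrow> real" where
  "out_entropy \<gamma> \<sigma> L F0 =
     - (LINT y : {0..} \<times> {0..<2*pi} | lborel.
          out_density \<gamma> \<sigma> L F0 (fst y) (snd y) * ln (out_density \<gamma> \<sigma> L F0 (fst y) (snd y)))"

text \<open>Joint input distributions of \<open>(R_0,\<Phi>_0)\<close> (polar coordinates).\<close>
definition input_dists :: "(real \<times> real) measure set" where
  "input_dists = {F0. prob_space F0 \<and> sets F0 = sets borel \<and>
      (AE x in F0. 0 \<le> fst x) \<and> (AE x in F0. snd x \<in> {0..<2*pi})}"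

definition weak_conv_seq :: "(nat \<Rightarrow> (real \<times> real) measure) \<Rightarrow> (real \<times> real) measure \<Rightarrow> bool" where
  "weak_conv_seq Fn F \<longleftrightarrow>
     (\<forall>f :: real \<times> real \<Rightarrow> real. continuous_on UNIV f \<and> bounded (range f) \<longrightarrow>
        (\<lambda>n. \<integral>x. f x \<partial>(Fn n)) \<longlonglongrightarrow> (\<integral>x. f x \<partial>F))"

definition weakly_continuous_on ::
  "(real \<times> real) measure set \<Rightarrow> ((real \<times> real) measure \<Rightarrow> real) \<Rightarrow> bool" where
  "weakly_continuous_on S H \<longleftrightarrow>
     (\<forall>Fn F. (\<forall>n. Fn n \<in> S) \<and> F \<in> S \<and> weak_conv_seq Fn F \<longrightarrow>
        (\<lambda>n. H (Fn n)) \<longlonglongrightarrow> H F)"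

definition admissible_cost :: "(real \<Rightarrow> real) \<Rightarrow> bool" where
  "admissible_cost C \<longleftrightarrow>
     (\<forall>x\<ge>0. 0 \<le> C x) \<and>
     (\<forall>a. openin (top_of_set {0..}) {x \<in> {0..}. a < C x}) \<and>
     mono_on {0..} C \<and> C 0 = 0 \<and> filterlim C at_top at_top \<and>
     (\<exists>\<delta>>0. \<exists>g. g holomorphic_on {z. \<bar>Im z\<bar> < \<delta>} \<and>
        (\<forall>x\<ge>0. g (of_real x) = of_real (C x)))"

text \<open>Sets of input distributions whose amplitude marginal lies in \<open>\<P>\<close> resp. \<open>\<A>\<close>.\<close>
definition peak_set :: "real \<Rightarrow> (real \<times> real) measure set" where
  "peak_set \<rho> = {F0 \<in> input_dists. AE x in F0. fst x \<le> \<rho>}"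

definition cost_set :: "(real \<Rightarrow> real) \<Rightarrow> real \<Rightarrow> (real \<times> real) measure set" where
  "cost_set C A = {F0 \<in> input_dists. (\<integral>\<^sup>+ x. ennreal (C (fst x)) \<partial>F0) \<le> ennreal A}"

end

theory Submission
  imports Defs "HOL-Real_Asymp.Real_Asymp"
begin

lemma sinh_ge_self: fixes y :: real assumes "0 \<le> y" shows "y \<le> sinh y"
proof -
  have "(\<lambda>t. sinh t - t) 0 \<le> (\<lambda>t. sinh t - t) y"
  proof (rule DERIV_nonneg_imp_nondecreasing[OF assms])
    fix x :: real
    show "\<exists>d. ((\<lambda>t. sinh t - t) has_real_derivative d) (at x) \<and> 0 \<le> d"
      by (rule exI[of _ "cosh x - 1"]) (auto intro!: derivative_eq_intros simp: cosh_real_ge_1)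
  qed
  then show ?thesis by simp
qed

lemma abs_sin_le_sinh: fixes y :: real assumes "0 \<le> y" shows "\<bar>sin y\<bar> \<le> sinh y"
  using abs_sin_x_le_abs_x[of y] sinh_ge_self[OF assms] assms by simp

lemma sc_le: fixes y :: real assumes "0 \<le> y"
  shows "\<bar>sin y * cos y\<bar> \<le> sinh y * cosh y"
proof -
  have "\<bar>sin y * cos y\<bar> \<le> sinh y * 1"
    unfolding abs_mult by (rule mult_mono) (use abs_sin_le_sinh[OF assms] assms in auto)
  also have "\<dots> \<le> sinh y * cosh y" by (rule mult_left_mono) (use assms cosh_real_ge_1 in auto)
  finally show ?thesis .
qed

lemma AB_nonneg: fixes y :: real assumes "0 \<le> y"
  shows "0 \<le> sinh y * cosh y + sin y * cos y"
  using sc_le[OF assms] by linarith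

lemma sinsq_le_sinhsq: fixes y :: real assumes "0 \<le> y" shows "sin y ^ 2 \<le> sinh y ^ 2"
  using abs_sin_le_sinh[OF assms] by (metis abs_le_square_iff abs_of_nonneg order.trans abs_ge_zero)

lemma ineqA1: fixes y :: real assumes "0 \<le> y"
  shows "2 * (sinh y ^ 2 + sin y ^ 2) \<le> (sinh y * cosh y + sin y * cos y) ^ 2"
proof -
  let ?F = "\<lambda>t::real. (sinh t * cosh t + sin t * cos t) ^ 2 - 2 * (sinh t ^ 2 + sin t ^ 2)"
  have "?F 0 \<le> ?F y"
  proof (rule DERIV_nonneg_imp_nondecreasing[OF assms])
    fix x :: real assume x: "0 \<le> x" "x \<le> y"
    have d: "(?F has_real_derivative 4 * (sinh x * cosh x + sin x * cos x) * (sinh x ^ 2 - sin x ^ 2)) (at x)"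
      apply (rule derivative_eq_intros refl)+
      apply (simp add: power2_eq_square)
      using cosh_square_eq[of x, unfolded power2_eq_square] sin_cos_squared_add[of x, unfolded power2_eq_square]
      by algebra
    have "0 \<le> 4 * (sinh x * cosh x + sin x * cos x) * (sinh x ^ 2 - sin x ^ 2)"
      using AB_nonneg[OF x(1)] sinsq_le_sinhsq[OF x(1)] by (intro mult_nonneg_nonneg) auto
    then show "\<exists>d. (?F has_real_derivative d) (at x) \<and> 0 \<le> d" using d by blast
  qed
  then show ?thesis by simp
qed

lemma ineqA2: fixes y :: real assumes "0 \<le> y"
  shows "sinh y ^ 2 + sin y ^ 2 \<le> y * (sinh y * cosh y + sin y * cos y)"
proof -
  let ?H = "\<lambda>t::real. t * (2 + 2 * sinh t ^ 2 - 2 * sin t ^ 2) - (sinh t * cosh t + sin t * cos t)"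
  let ?G = "\<lambda>t::real. t * (sinh t * cosh t + sin t * cos t) - (sinh t ^ 2 + sin t ^ 2)"
  have H: "0 \<le> ?H x" if x: "0 \<le> x" for x
  proof -
    have "?H 0 \<le> ?H x"
    proof (rule DERIV_nonneg_imp_nondecreasing[OF x])
      fix z :: real assume z: "0 \<le> z" "z \<le> x"
      have d: "(?H has_real_derivative 4 * z * (sinh z * cosh z - sin z * cos z)) (at z)"
        apply (rule derivative_eq_intros refl)+
        apply (simp add: power2_eq_square)
        using cosh_square_eq[of z, unfolded power2_eq_square] sin_cos_squared_add[of z, unfolded power2_eq_square]
        by algebra
      have "0 \<le> 4 * z * (sinh z * cosh z - sin z * cos z)" using z sc_le[OF z(1)] by (intro mult_nonneg_nonneg) auto
      then show "\<exists>d. (?H has_real_derivative d) (at z) \<and> 0 \<le> d" using d by blast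
    qed
    then show ?thesis by simp
  qed
  have "?G 0 \<le> ?G y"
  proof (rule DERIV_nonneg_imp_nondecreasing[OF assms])
    fix x :: real assume x: "0 \<le> x" "x \<le> y"
    have d: "(?G has_real_derivative ?H x) (at x)"
      apply (rule derivative_eq_intros refl)+
      apply (simp add: power2_eq_square)
      using cosh_square_eq[of x, unfolded power2_eq_square] sin_cos_squared_add[of x, unfolded power2_eq_square]
      by algebra
    show "\<exists>d. (?G has_real_derivative d) (at x) \<and> 0 \<le> d" using d H[OF x(1)] by blast
  qed
  then show ?thesis by simp
qed


lemma csqrt_i_real: assumes "0 \<le> t"
  shows "csqrt (\<i> * complex_of_real t) = complex_of_real (sqrt (t/2)) * (1 + \<i>)"
proof (rule csqrt_unique)
  have "(complex_of_real (sqrt (t/2)) * (1 + \<i>))\<^sup>2 = complex_of_real (sqrt (t/2))^2 * (1+\<i>)^2"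
    by (simp add: power_mult_distrib)
  also have "\<dots> = complex_of_real (t/2) * (2 * \<i>)"
  proof -
    have i2: "(1+\<i>)^2 = 2*\<i>" by (simp add: complex_eq_iff power2_eq_square)
    show ?thesis using assms by (simp add: i2 flip: of_real_power)
  qed
  also have "\<dots> = \<i> * complex_of_real t" by (simp add: field_simps)
  finally show "(complex_of_real (sqrt (t/2)) * (1 + \<i>))\<^sup>2 = \<i> * complex_of_real t" .
  show "0 < Re (complex_of_real (sqrt (t/2)) * (1 + \<i>)) \<or>
    Re (complex_of_real (sqrt (t/2)) * (1 + \<i>)) = 0 \<and> 0 \<le> Im (complex_of_real (sqrt (t/2)) * (1 + \<i>))"
    using assms by (cases "t = 0") auto
qed

lemma sinh_Complex_diag: "sinh (Complex y y) = Complex (sinh y * cos y) (cosh y * sin y)"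
proof -
  have m: "- Complex y y = Complex (-y) (-y)" by (simp add: complex_eq_iff)
  show ?thesis
    unfolding sinh_def m exp_Complex
    by (simp add: complex_eq_iff sinh_def cosh_def exp_minus field_simps)
qed

lemma cosh_Complex_diag: "cosh (Complex y y) = Complex (cosh y * cos y) (sinh y * sin y)"
proof -
  have m: "- Complex y y = Complex (-y) (-y)" by (simp add: complex_eq_iff)
  show ?thesis
    unfolding cosh_def m exp_Complex
    by (simp add: complex_eq_iff sinh_def cosh_def exp_minus field_simps)
qed

lemma key_complex:
  fixes y c :: real
  assumes y: "0 < y" and c: "0 < c"
  defines "w \<equiv> complex_of_real c * (1 + \<i>)" and "u \<equiv> Complex y y"
  shows "cmod (w / sinh u) \<le> Re (w * (cosh u / sinh u))"
    and "c / y \<le> Re (w * (cosh u / sinh u))"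
    and "cmod (w / sinh u) \<le> sqrt 2 * c / sinh y"
proof -
  define sh ch sn cs where "sh = sinh y" "ch = cosh y" "sn = sin y" "cs = cos y"
  have id1: "ch * ch = sh * sh + 1" using cosh_square_eq[of y] unfolding sh_ch_sn_cs_def power2_eq_square by simp
  have id2: "sn * sn + cs * cs = 1" using sin_cos_squared_add[of y] unfolding sh_ch_sn_cs_def power2_eq_square by simp
  have shpos: "0 < sh" using y unfolding sh_ch_sn_cs_def by simp
  define Dn where "Dn = sh * sh + sn * sn"
  define N where "N = sh * ch + sn * cs"
  have Dnpos: "0 < Dn" unfolding Dn_def using shpos by (simp add: add_pos_nonneg)
  have S: "sinh u = Complex (sh * cs) (ch * sn)" unfolding u_def sh_ch_sn_cs_def by (rule sinh_Complex_diag)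
  have C: "cosh u = Complex (ch * cs) (sh * sn)" unfolding u_def sh_ch_sn_cs_def by (rule cosh_Complex_diag)
  have den: "(sh * cs) * (sh * cs) + (ch * sn) * (ch * sn) = Dn"
    unfolding Dn_def using id1 id2 by algebra
  have num: "(c * (ch * cs) - c * (sh * sn)) * (sh * cs) + (c * (ch * cs) + c * (sh * sn)) * (ch * sn) = c * N"
    unfolding N_def using id1 id2 by algebra
  have wC: "w * cosh u = Complex (c * (ch * cs) - c * (sh * sn)) (c * (ch * cs) + c * (sh * sn))"
    unfolding w_def C by (simp add: complex_eq_iff algebra_simps)
  have ReA: "Re (w * (cosh u / sinh u)) = c * N / Dn"
  proof -
    have "w * (cosh u / sinh u) = (w * cosh u) / sinh u" by simp
    also have "Re \<dots> = c * N / Dn"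
      unfolding wC S Re_divide using num den by (simp add: power2_eq_square)
    finally show ?thesis .
  qed
  have cm: "cmod (w / sinh u) = c * sqrt 2 / sqrt Dn"
  proof -
    have "cmod w = c * sqrt 2" unfolding w_def norm_mult using c by (simp add: cmod_def)
    moreover have "cmod (sinh u) = sqrt Dn" unfolding S cmod_def using den by (simp add: power2_eq_square)
    ultimately show ?thesis by (simp add: norm_divide)
  qed
  have NN: "0 \<le> N" unfolding N_def sh_ch_sn_cs_def using AB_nonneg[of y] y by simp
  have A1: "2 * Dn \<le> N^2" unfolding N_def Dn_def sh_ch_sn_cs_def using ineqA1[of y] y by (simp add: power2_eq_square)
  have A2: "Dn \<le> y * N" unfolding N_def Dn_def sh_ch_sn_cs_def using ineqA2[of y] y by (simp add: power2_eq_square)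
  have sq: "sqrt 2 * sqrt Dn \<le> N"
  proof -
    have "sqrt 2 * sqrt Dn = sqrt (2 * Dn)" by (simp add: real_sqrt_mult)
    also have "\<dots> \<le> sqrt (N^2)" using A1 by (rule real_sqrt_le_mono)
    also have "\<dots> = N" using NN by simp
    finally show ?thesis .
  qed
  have sD: "sqrt Dn * sqrt Dn = Dn" using Dnpos by simp
  show "cmod (w / sinh u) \<le> Re (w * (cosh u / sinh u))"
    unfolding cm ReA
  proof -
    have "c * sqrt 2 / sqrt Dn = c * (sqrt 2 * sqrt Dn) / Dn" using Dnpos sD by (simp add: field_simps)
    also have "\<dots> \<le> c * N / Dn" using sq c Dnpos by (intro divide_right_mono mult_left_mono) auto
    finally show "c * sqrt 2 / sqrt Dn \<le> c * N / Dn" .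
  qed
  show "c / y \<le> Re (w * (cosh u / sinh u))"
    unfolding ReA using A2 y c Dnpos by (simp add: field_simps)
  show "cmod (w / sinh u) \<le> sqrt 2 * c / sinh y"
    unfolding cm
  proof -
    have "sh * sh \<le> Dn" unfolding Dn_def by simp
    then have "sqrt (sh * sh) \<le> sqrt Dn" by (rule real_sqrt_le_mono)
    then have "sh \<le> sqrt Dn" using shpos by simp
    then have "c * sqrt 2 / sqrt Dn \<le> c * sqrt 2 / sh" using shpos c Dnpos
      by (intro divide_left_mono) (auto intro!: mult_pos_pos)
    then show "c * sqrt 2 / sqrt Dn \<le> sqrt 2 * c / sinh y" unfolding sh_ch_sn_cs_def by (simp add: mult.commute)
  qed
qed

definition yv :: "real \<Rightarrow> real \<Rightarrow> real \<Rightarrow> nat \<Rightarrow> real" where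
  "yv \<gamma> \<sigma> L m = sqrt (real m * \<gamma> * \<sigma>\<^sup>2 / 2) * L"

lemma coef_forms:
  fixes m :: nat
  assumes g: "0 < \<gamma>" and s: "0 < \<sigma>" and L: "0 < L"
  defines "y \<equiv> yv \<gamma> \<sigma> L m"
  shows "a_coef \<gamma> \<sigma> L m = complex_of_real (y / (\<sigma>\<^sup>2 * L)) * (1 + \<i>) * (cosh (Complex y y) / sinh (Complex y y))"
    and "b_coef \<gamma> \<sigma> L m = complex_of_real (y / (\<sigma>\<^sup>2 * L)) * (1 + \<i>) / sinh (Complex y y)"
proof -
  have e1: "\<i> * of_nat m * complex_of_real \<gamma> = \<i> * complex_of_real (real m * \<gamma>)" by simp
  have e2: "\<i> * of_nat m * complex_of_real \<gamma> * complex_of_real (\<sigma>\<^sup>2) = \<i> * complex_of_real (real m * \<gamma> * \<sigma>\<^sup>2)" by simp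
  have nn1: "0 \<le> real m * \<gamma>" using g by simp
  have nn2: "0 \<le> real m * \<gamma> * \<sigma>\<^sup>2" using g by simp
  have cc: "sqrt (real m * \<gamma> / 2) / \<sigma> = y / (\<sigma>\<^sup>2 * L)"
  proof -
    have "sqrt (real m * \<gamma> * \<sigma>\<^sup>2 / 2) = sqrt (real m * \<gamma> / 2) * sqrt (\<sigma>\<^sup>2)"
      by (subst real_sqrt_mult[symmetric]) (simp add: field_simps)
    then have "y = sqrt (real m * \<gamma> / 2) * \<sigma> * L" unfolding y_def yv_def using s by simp
    then show ?thesis using s L by (simp add: field_simps power2_eq_square)
  qed
  have W: "csqrt (\<i> * of_nat m * complex_of_real \<gamma>) / complex_of_real \<sigma>
      = complex_of_real (y / (\<sigma>\<^sup>2 * L)) * (1 + \<i>)"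
    unfolding e1 csqrt_i_real[OF nn1] cc[symmetric] by (simp add: field_simps)
  have U: "csqrt (\<i> * of_nat m * complex_of_real \<gamma> * complex_of_real (\<sigma>\<^sup>2)) * complex_of_real L = Complex y y"
    unfolding e2 csqrt_i_real[OF nn2] y_def yv_def by (simp add: complex_eq_iff)
  show "a_coef \<gamma> \<sigma> L m = complex_of_real (y / (\<sigma>\<^sup>2 * L)) * (1 + \<i>) * (cosh (Complex y y) / sinh (Complex y y))"
    unfolding a_coef_def coth_c_def W U ..
  show "b_coef \<gamma> \<sigma> L m = complex_of_real (y / (\<sigma>\<^sup>2 * L)) * (1 + \<i>) / sinh (Complex y y)"
    unfolding b_coef_def W U ..
qed

lemma yv_pos: "0 < \<gamma> \<Longrightarrow> 0 < \<sigma> \<Longrightarrow> 0 < L \<Longrightarrow> 0 < m \<Longrightarrow> 0 < yv \<gamma> \<sigma> L m"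
  unfolding yv_def by simp

lemma coef_props:
  assumes g: "0 < \<gamma>" and s: "0 < \<sigma>" and L: "0 < L" and m: "0 < m"
  shows "cmod (b_coef \<gamma> \<sigma> L m) \<le> Re (a_coef \<gamma> \<sigma> L m)"
    and "1 / (\<sigma>\<^sup>2 * L) \<le> Re (a_coef \<gamma> \<sigma> L m)"
    and "cmod (b_coef \<gamma> \<sigma> L m) \<le> sqrt 2 * (yv \<gamma> \<sigma> L m / (\<sigma>\<^sup>2 * L)) / sinh (yv \<gamma> \<sigma> L m)"
proof -
  define y where "y = yv \<gamma> \<sigma> L m"
  have y: "0 < y" unfolding y_def using yv_pos[OF g s L m] .
  have c: "0 < y / (\<sigma>\<^sup>2 * L)" using y s L by simp
  note K = key_complex[OF y c]
  show "cmod (b_coef \<gamma> \<sigma> L m) \<le> Re (a_coef \<gamma> \<sigma> L m)"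
    unfolding coef_forms[OF g s L] y_def[symmetric] using K(1) by simp
  have "y / (\<sigma>\<^sup>2 * L) / y = 1 / (\<sigma>\<^sup>2 * L)" using y by simp
  then show "1 / (\<sigma>\<^sup>2 * L) \<le> Re (a_coef \<gamma> \<sigma> L m)"
    unfolding coef_forms[OF g s L] y_def[symmetric] using K(2) by simp
  show "cmod (b_coef \<gamma> \<sigma> L m) \<le> sqrt 2 * (yv \<gamma> \<sigma> L m / (\<sigma>\<^sup>2 * L)) / sinh (yv \<gamma> \<sigma> L m)"
    unfolding coef_forms[OF g s L] y_def[symmetric] using K(3) by simp
qed


definition ef :: "real \<Rightarrow> nat \<Rightarrow> real" where "ef x n = x ^ n / fact n"

lemma ef_sums: "ef x sums exp x"
  using exp_converges[of x] unfolding ef_def by (simp add: divide_inverse mult.commute scaleR_conv_of_real)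

lemma ef_nonneg: "0 \<le> x \<Longrightarrow> 0 \<le> ef x n" unfolding ef_def by simp

lemma fact_central_bound: "fact (2*k+m) \<le> (2::nat)^(2*k+m) * (fact k * fact (k+m))"
proof -
  have "fact k * fact (2*k+m - k) * ((2*k+m) choose k) = (fact (2*k+m) :: nat)"
    by (rule binomial_fact_lemma) simp
  then have "fact (2*k+m) = fact k * fact (k+m) * ((2*k+m) choose k)"
    by (simp add: add.commute mult_2)
  also have "\<dots> \<le> fact k * fact (k+m) * 2^(2*k+m)"
    by (intro mult_left_mono binomial_le_pow2) simp
  finally show ?thesis by (simp add: mult.commute)
qed

lemma besselI_alt: "besselI m z = (\<Sum>k. (z/2)^(2*k+m) / (fact k * fact (k+m) :: complex))"
  by (simp add: besselI_def)

lemma bessel_term_bound: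
  "cmod ((z/2)^(2*k+m) / (fact k * fact (k+m) :: complex)) \<le> ef (cmod z) (2*k+m)"
proof -
  have fk: "(fact (2*k+m)::real) \<le> 2^(2*k+m) * (fact k * fact (k+m))"
    using fact_central_bound[of k m] by (metis (mono_tags) of_nat_fact of_nat_le_iff of_nat_mult of_nat_numeral of_nat_power)
  have "cmod ((z/2)^(2*k+m) / (fact k * fact (k+m) :: complex)) = (cmod z)^(2*k+m) / (2^(2*k+m) * (fact k * fact (k+m)))"
    by (simp add: norm_divide norm_power norm_mult power_divide)
  also have "\<dots> \<le> (cmod z)^(2*k+m) / fact (2*k+m)"
    by (rule divide_left_mono[OF fk]) auto
  finally show ?thesis unfolding ef_def .
qed

lemma ef_reindex:
  assumes "0 \<le> x"
  shows "summable (\<lambda>k. ef x (2*k+m))" "(\<Sum>k. ef x (2*k+m)) \<le> exp x"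
proof -
  have inj: "inj (\<lambda>k::nat. 2*k+m)" by (rule injI) simp
  note S = summable_reindex[OF sums_summable[OF ef_sums] inj ef_nonneg[OF assms]]
     suminf_reindex_mono[OF sums_summable[OF ef_sums] inj ef_nonneg[OF assms]]
  show "summable (\<lambda>k. ef x (2*k+m))" using S(1) by (simp add: o_def)
  show "(\<Sum>k. ef x (2*k+m)) \<le> exp x" using S(2) sums_unique[OF ef_sums[of x]] by (simp add: o_def)
qed

lemma bessel_summable:
  "summable (\<lambda>k. norm ((z/2)^(2*k+m) / (fact k * fact (k+m) :: complex) :: complex))"
  by (rule summable_comparison_test[OF _ ef_reindex(1)[of "cmod z" m]])
     (auto intro!: exI[of _ 0] bessel_term_bound)

lemma besselI_bound: "cmod (besselI m z) \<le> exp (cmod z)"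
proof -
  have "cmod (besselI m z) \<le> (\<Sum>k. norm ((z/2)^(2*k+m) / (fact k * fact (k+m) :: complex) :: complex))"
    unfolding besselI_alt by (rule summable_norm[OF bessel_summable])
  also have "\<dots> \<le> (\<Sum>k. ef (cmod z) (2*k+m))"
    by (rule suminf_le[OF _ bessel_summable ef_reindex(1)]) (auto intro: bessel_term_bound)
  also have "\<dots> \<le> exp (cmod z)" by (rule ef_reindex(2)) simp
  finally show ?thesis .
qed

lemma besselI_cont_ball: "continuous_on (cball 0 R) (besselI m)"
proof -
  have ul: "uniform_limit (cball 0 R)
      (\<lambda>n (z::complex). \<Sum>k<n. (z/2)^(2*k+m) / (fact k * fact (k+m) :: complex))
      (\<lambda>z::complex. \<Sum>k. (z/2)^(2*k+m) / (fact k * fact (k+m) :: complex)) sequentially"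
  proof (rule Weierstrass_m_test)
    fix k and z :: complex assume "z \<in> cball 0 R"
    then have z: "cmod z \<le> R" by simp
    have "norm ((z/2)^(2*k+m) / (fact k * fact (k+m) :: complex)) \<le> ef (cmod z) (2*k+m)"
      by (rule bessel_term_bound)
    also have "\<dots> \<le> ef R (2*k+m)" unfolding ef_def
      by (intro divide_right_mono power_mono z) auto
    finally show "norm ((z/2)^(2*k+m) / (fact k * fact (k+m) :: complex)) \<le> ef R (2*k+m)" .
  next
    show "summable (\<lambda>k. ef R (2*k+m))"
    proof (cases "0 \<le> R")
      case True then show ?thesis by (rule ef_reindex(1))
    next
      case False
      show ?thesis by (rule summable_comparison_test[OF _ ef_reindex(1)[of "\<bar>R\<bar>" m]])
        (auto simp: ef_def abs_mult power_abs intro!: exI[of _ 0])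
    qed
  qed
  have "continuous_on (cball 0 R) (\<lambda>z::complex. \<Sum>k. (z/2)^(2*k+m) / (fact k * fact (k+m) :: complex))"
    by (rule uniform_limit_theorem[OF _ ul]) (auto intro!: always_eventually continuous_intros)
  then show ?thesis unfolding besselI_alt[abs_def] .
qed

lemma isCont_besselI: "isCont (besselI m) z"
  by (rule continuous_on_interior[OF besselI_cont_ball[of "cmod z + 1"]]) (auto simp: interior_cball)

lemma continuous_on_besselI [continuous_intros]:
  "continuous_on S f \<Longrightarrow> continuous_on S (\<lambda>x. besselI m (f x))"
  by (rule continuous_on_compose2[OF continuous_at_imp_continuous_on[of UNIV "besselI m"]])
     (auto intro: isCont_besselI)


lemma sinh_ge_pow5: fixes y :: real assumes "0 \<le> y" shows "y^5 / 6250 \<le> sinh y"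
proof -
  have "(1 + y/5)^5 \<le> exp y" using exp_ge_one_plus_x_over_n_power_n[where x=y and n=5] assms by simp
  moreover have "1 + (y/5)^5 \<le> (1 + y/5)^5"
  proof -
    define t where "t = y/5"
    have t: "0 \<le> t" using assms unfolding t_def by simp
    have "(1 + t)^5 = 1 + t^5 + t * (5 + 10*t + 10*t^2 + 5*t^3)"
      by (simp add: eval_nat_numeral algebra_simps)
    moreover have "0 \<le> t * (5 + 10*t + 10*t^2 + 5*t^3)" using t by simp
    ultimately show ?thesis unfolding t_def[symmetric] by linarith
  qed
  moreover have "exp (-y) \<le> 1" using assms by simp
  moreover have "(y/5)^5 = y^5/3125" by (simp add: power_divide)
  ultimately have "y^5/3125 \<le> exp y - exp (-y)" by linarith
  then show ?thesis unfolding sinh_def by simp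
qed

context
  fixes \<gamma> \<sigma> L :: real
  assumes g: "0 < \<gamma>" and sg: "0 < \<sigma>" and L: "0 < L"
begin

lemma b_summable: "summable (\<lambda>k. cmod (b_coef \<gamma> \<sigma> L (Suc k)))"
proof -
  define q where "q = \<gamma> * \<sigma>\<^sup>2 / 2"
  have q: "0 < q" unfolding q_def using g sg by simp
  define Kc where "Kc = sqrt 2 / (\<sigma>\<^sup>2 * L) * 6250 / (q^2 * L^4)"
  have bnd: "cmod (b_coef \<gamma> \<sigma> L (Suc k)) \<le> Kc * inverse (real (Suc k) ^ 2)" for k
  proof -
    define y where "y = yv \<gamma> \<sigma> L (Suc k)"
    have y: "0 < y" unfolding y_def using yv_pos[OF g sg L] by simp
    have y4: "y^4 = (real (Suc k))^2 * q^2 * L^4"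
    proof -
      have "y = sqrt (real (Suc k) * q) * L" unfolding y_def yv_def q_def by (simp add: mult.assoc)
      then have "y^4 = (sqrt (real (Suc k) * q))^4 * L^4" by (simp add: power_mult_distrib)
      also have "(sqrt (real (Suc k) * q))^4 = ((sqrt (real (Suc k) * q))^2)^2" by simp
      also have "\<dots> = (real (Suc k) * q)^2" using q by simp
      finally show ?thesis by (simp add: power_mult_distrib)
    qed
    have sh: "y^5 / 6250 \<le> sinh y" using sinh_ge_pow5 y by simp
    have shp: "0 < sinh y" using y by simp
    have "cmod (b_coef \<gamma> \<sigma> L (Suc k)) \<le> sqrt 2 * (y / (\<sigma>\<^sup>2 * L)) / sinh y"
      unfolding y_def by (rule coef_props(3)[OF g sg L]) simp
    also have "\<dots> \<le> sqrt 2 * (y / (\<sigma>\<^sup>2 * L)) / (y^5 / 6250)"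
      by (rule divide_left_mono[OF sh]) (use y sg L in auto)
    also have "\<dots> = sqrt 2 / (\<sigma>\<^sup>2 * L) * 6250 / y^4"
      using y by (simp add: field_simps eval_nat_numeral)
    also have "\<dots> = Kc * inverse (real (Suc k) ^ 2)"
      unfolding y4 Kc_def using q L by (simp add: field_simps)
    finally show ?thesis .
  qed
  have "summable (\<lambda>k. Kc * inverse (real (Suc k) ^ 2))"
  proof -
    have s0: "summable (\<lambda>n. inverse (real n ^ 2))" by (rule inverse_power_summable) simp
    have "summable (\<lambda>n. inverse (real (Suc n) ^ 2))"
      by (rule summable_Suc_iff[where f="\<lambda>n. inverse (real n ^ 2)", THEN iffD2, OF s0])
    then show ?thesis by (rule summable_mult)
  qed
  then show ?thesis by (rule summable_comparison_test[rotated]) (use bnd in \<open>auto intro!: exI[of _ 0]\<close>)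
qed

definition "beta = (\<Sum>k. cmod (b_coef \<gamma> \<sigma> L (Suc k)))"
definition "sv = \<sigma>\<^sup>2 * L"
definition "kap = 1 / (pi * sv) + beta / pi"

lemma sv_pos: "0 < sv" unfolding sv_def using sg L by simp
lemma beta_nonneg: "0 \<le> beta" unfolding beta_def by (rule suminf_nonneg[OF b_summable]) simp
lemma kap_pos: "0 < kap" unfolding kap_def using sv_pos beta_nonneg by (simp add: add_pos_nonneg)

lemma gauss_ineq:
  fixes A B r r0 :: real
  assumes "B \<le> A" "1 / sv \<le> A" "0 \<le> B"
  shows "exp (- A * (r\<^sup>2 + r0\<^sup>2)) * exp (2 * B * \<bar>r0\<bar> * \<bar>r\<bar>) \<le> exp (- ((\<bar>r\<bar> - \<bar>r0\<bar>)\<^sup>2 / sv))"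
proof -
  have "2 * B * \<bar>r0\<bar> * \<bar>r\<bar> \<le> 2 * A * \<bar>r0\<bar> * \<bar>r\<bar>"
    using assms by (intro mult_right_mono) auto
  moreover have "(\<bar>r\<bar> - \<bar>r0\<bar>)\<^sup>2 / sv \<le> A * (\<bar>r\<bar> - \<bar>r0\<bar>)\<^sup>2"
  proof -
    have "1 \<le> A * sv" using assms sv_pos by (simp add: field_simps)
    then have "1 * (\<bar>r\<bar> - \<bar>r0\<bar>)\<^sup>2 \<le> (A * sv) * (\<bar>r\<bar> - \<bar>r0\<bar>)\<^sup>2" by (rule mult_right_mono) simp
    then show ?thesis using sv_pos by (simp add: field_simps)
  qed
  moreover have "A * (\<bar>r\<bar> - \<bar>r0\<bar>)\<^sup>2 = A * (r\<^sup>2 + r0\<^sup>2) - 2 * A * \<bar>r0\<bar> * \<bar>r\<bar>"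
    by (simp add: power2_eq_square algebra_simps)
  ultimately have "- A * (r\<^sup>2 + r0\<^sup>2) + 2 * B * \<bar>r0\<bar> * \<bar>r\<bar> \<le> - ((\<bar>r\<bar> - \<bar>r0\<bar>)\<^sup>2 / sv)"
    by linarith
  then show ?thesis by (simp flip: exp_add)
qed

lemma C_bound:
  assumes m: "0 < m"
  shows "cmod (C_coef \<gamma> \<sigma> L m r r0) \<le> \<bar>r\<bar> * cmod (b_coef \<gamma> \<sigma> L m) * exp (- ((\<bar>r\<bar> - \<bar>r0\<bar>)\<^sup>2 / sv))"
proof -
  note cp = coef_props[OF g sg L m]
  let ?a = "a_coef \<gamma> \<sigma> L m" and ?b = "b_coef \<gamma> \<sigma> L m"
  have e: "cmod (exp (- ?a * complex_of_real (r\<^sup>2 + r0\<^sup>2))) = exp (- Re ?a * (r\<^sup>2 + r0\<^sup>2))"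
    by simp
  have I: "cmod (besselI m (2 * ?b * complex_of_real r0 * complex_of_real r)) \<le> exp (2 * cmod ?b * \<bar>r0\<bar> * \<bar>r\<bar>)"
    using besselI_bound[of m "2 * ?b * complex_of_real r0 * complex_of_real r"] by (simp add: norm_mult)
  have "cmod (C_coef \<gamma> \<sigma> L m r r0) = \<bar>r\<bar> * cmod ?b * (exp (- Re ?a * (r\<^sup>2 + r0\<^sup>2))
       * cmod (besselI m (2 * ?b * complex_of_real r0 * complex_of_real r)))"
    unfolding C_coef_def norm_mult e by simp
  also have "\<dots> \<le> \<bar>r\<bar> * cmod ?b * (exp (- Re ?a * (r\<^sup>2 + r0\<^sup>2)) * exp (2 * cmod ?b * \<bar>r0\<bar> * \<bar>r\<bar>))"
    by (intro mult_left_mono I) auto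
  also have "\<dots> \<le> \<bar>r\<bar> * cmod ?b * exp (- ((\<bar>r\<bar> - \<bar>r0\<bar>)\<^sup>2 / sv))"
    by (intro mult_left_mono gauss_ineq) (use cp sv_def in auto)
  finally show ?thesis .
qed

lemma pR_bound: "\<bar>pR \<sigma> L r r0\<bar> \<le> 2 / sv * \<bar>r\<bar> * exp (- ((\<bar>r\<bar> - \<bar>r0\<bar>)\<^sup>2 / sv))"
proof -
  have I: "\<bar>Re (besselI 0 (complex_of_real (2 * r * r0 / sv)))\<bar> \<le> exp (2 * (1/sv) * \<bar>r0\<bar> * \<bar>r\<bar>)"
  proof -
    have cz: "cmod (complex_of_real (2*r*r0/sv)) = 2*(1/sv)*\<bar>r0\<bar>*\<bar>r\<bar>"
      unfolding norm_of_real using sv_pos by (simp add: abs_mult)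
    show ?thesis by (metis cz order.trans abs_Re_le_cmod besselI_bound)
  qed
  have ex: "exp (- (r\<^sup>2 + r0\<^sup>2) / sv) = exp (- (1/sv) * (r\<^sup>2 + r0\<^sup>2))" using sv_pos by (simp add: field_simps)
  have "\<bar>pR \<sigma> L r r0\<bar> = 2 / sv * \<bar>r\<bar> * (exp (- (1/sv) * (r\<^sup>2 + r0\<^sup>2)) * \<bar>Re (besselI 0 (complex_of_real (2 * r * r0 / sv)))\<bar>)"
    unfolding pR_def sv_def[symmetric] ex using sv_pos by (simp add: abs_mult diff_divide_distrib add_divide_distrib)
  also have "\<dots> \<le> 2 / sv * \<bar>r\<bar> * (exp (- (1/sv) * (r\<^sup>2 + r0\<^sup>2)) * exp (2 * (1/sv) * \<bar>r0\<bar> * \<bar>r\<bar>))"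
    using sv_pos by (intro mult_left_mono I) auto
  also have "\<dots> \<le> 2 / sv * \<bar>r\<bar> * exp (- ((\<bar>r\<bar> - \<bar>r0\<bar>)\<^sup>2 / sv))"
    using sv_pos by (intro mult_left_mono gauss_ineq) auto
  finally show ?thesis .
qed

definition "term_k k r \<phi> r0 \<phi>0 = Re (C_coef \<gamma> \<sigma> L (Suc k) r r0
            * exp (\<i> * of_nat (Suc k) * of_real (\<phi> - \<phi>0 - \<gamma> * r0\<^sup>2 * L)))"

lemma term_bound: "\<bar>term_k k r \<phi> r0 \<phi>0\<bar> \<le> \<bar>r\<bar> * cmod (b_coef \<gamma> \<sigma> L (Suc k)) * exp (- ((\<bar>r\<bar> - \<bar>r0\<bar>)\<^sup>2 / sv))"
proof -
  have "\<bar>term_k k r \<phi> r0 \<phi>0\<bar> \<le> cmod (C_coef \<gamma> \<sigma> L (Suc k) r r0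
            * exp (\<i> * of_nat (Suc k) * of_real (\<phi> - \<phi>0 - \<gamma> * r0\<^sup>2 * L)))"
    unfolding term_k_def by (rule abs_Re_le_cmod)
  also have "\<dots> = cmod (C_coef \<gamma> \<sigma> L (Suc k) r r0)" by (simp add: norm_mult)
  also have "\<dots> \<le> \<bar>r\<bar> * cmod (b_coef \<gamma> \<sigma> L (Suc k)) * exp (- ((\<bar>r\<bar> - \<bar>r0\<bar>)\<^sup>2 / sv))" by (rule C_bound) simp
  finally show ?thesis .
qed

lemma term_bound2: "\<bar>term_k k r \<phi> r0 \<phi>0\<bar> \<le> \<bar>r\<bar> * cmod (b_coef \<gamma> \<sigma> L (Suc k))"
proof -
  have "exp (- ((\<bar>r\<bar> - \<bar>r0\<bar>)\<^sup>2 / sv)) \<le> 1" using sv_pos by simp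
  then have "\<bar>r\<bar> * cmod (b_coef \<gamma> \<sigma> L (Suc k)) * exp (- ((\<bar>r\<bar> - \<bar>r0\<bar>)\<^sup>2 / sv)) \<le> \<bar>r\<bar> * cmod (b_coef \<gamma> \<sigma> L (Suc k)) * 1"
    by (intro mult_left_mono) auto
  then show ?thesis using term_bound[of k r \<phi> r0 \<phi>0] by simp
qed

lemma term_summable: "summable (\<lambda>k. \<bar>term_k k r \<phi> r0 \<phi>0\<bar>)"
  by (rule summable_comparison_test[OF _ summable_mult[OF b_summable, of "\<bar>r\<bar>"]])
     (auto intro!: exI[of _ 0] term_bound2)

lemma pzd_alt: "pzd_cond \<gamma> \<sigma> L r \<phi> r0 \<phi>0 = pR \<sigma> L r r0 / (2 * pi) + (1 / pi) * (\<Sum>k. term_k k r \<phi> r0 \<phi>0)"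
  unfolding pzd_cond_def term_k_def ..

lemma pzd_bound: "\<bar>pzd_cond \<gamma> \<sigma> L r \<phi> r0 \<phi>0\<bar> \<le> kap * \<bar>r\<bar> * exp (- ((\<bar>r\<bar> - \<bar>r0\<bar>)\<^sup>2 / sv))"
proof -
  define E where "E = exp (- ((\<bar>r\<bar> - \<bar>r0\<bar>)\<^sup>2 / sv))"
  have s1: "summable (\<lambda>k. \<bar>r\<bar> * E * cmod (b_coef \<gamma> \<sigma> L (Suc k)))"
    by (rule summable_mult[OF b_summable])
  have "\<bar>\<Sum>k. term_k k r \<phi> r0 \<phi>0\<bar> \<le> (\<Sum>k. \<bar>term_k k r \<phi> r0 \<phi>0\<bar>)"
    by (rule summable_rabs[OF term_summable])
  also have "\<dots> \<le> (\<Sum>k. \<bar>r\<bar> * E * cmod (b_coef \<gamma> \<sigma> L (Suc k)))"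
    by (rule suminf_le[OF _ term_summable s1]) (use term_bound in \<open>simp add: E_def mult_ac\<close>)
  also have "\<dots> = \<bar>r\<bar> * E * beta" unfolding beta_def by (rule suminf_mult[OF b_summable])
  finally have S: "\<bar>\<Sum>k. term_k k r \<phi> r0 \<phi>0\<bar> \<le> \<bar>r\<bar> * E * beta" .
  have "\<bar>pzd_cond \<gamma> \<sigma> L r \<phi> r0 \<phi>0\<bar> \<le> \<bar>pR \<sigma> L r r0\<bar> / (2 * pi) + (1/pi) * \<bar>\<Sum>k. term_k k r \<phi> r0 \<phi>0\<bar>"
    unfolding pzd_alt by (rule order.trans[OF abs_triangle_ineq]) (simp add: abs_mult)
  also have "\<dots> \<le> (2 / sv * \<bar>r\<bar> * E) / (2 * pi) + (1/pi) * (\<bar>r\<bar> * E * beta)"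
    using pR_bound[of r r0] S unfolding E_def
    by (intro add_mono divide_right_mono mult_left_mono) auto
  also have "\<dots> = kap * \<bar>r\<bar> * E" unfolding kap_def by (simp add: field_simps)
  finally show ?thesis unfolding E_def .
qed

end


context
  fixes \<gamma> \<sigma> L :: real
  assumes g: "0 < \<gamma>" and sg: "0 < \<sigma>" and L: "0 < L"
begin

definition "Kf q = pzd_cond \<gamma> \<sigma> L (fst (fst q)) (snd (fst q)) (fst (snd q)) (snd (snd q))"

lemma Kf_cont_ball: "continuous_on (cball 0 R) Kf"
proof -
  let ?t = "\<lambda>k (q::(real\<times>real)\<times>(real\<times>real)). term_k \<gamma> \<sigma> L k (fst (fst q)) (snd (fst q)) (fst (snd q)) (snd (snd q))"
  have ul: "uniform_limit (cball 0 R) (\<lambda>n q. \<Sum>k<n. ?t k q) (\<lambda>q. \<Sum>k. ?t k q) sequentially"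
  proof (rule Weierstrass_m_test)
    fix k and q :: "(real\<times>real)\<times>(real\<times>real)" assume "q \<in> cball 0 R"
    then have "norm q \<le> R" by simp
    moreover have "\<bar>fst (fst q)\<bar> \<le> norm q"
      using norm_fst_le[of "fst (fst q)" "snd (fst q)"] norm_fst_le[of "fst q" "snd q"] by simp
    ultimately have r: "\<bar>fst (fst q)\<bar> \<le> R" by linarith
    have "norm (?t k q) \<le> \<bar>fst (fst q)\<bar> * cmod (b_coef \<gamma> \<sigma> L (Suc k))"
      using term_bound2[OF g sg L] by simp
    also have "\<dots> \<le> R * cmod (b_coef \<gamma> \<sigma> L (Suc k))" by (intro mult_right_mono r) simp
    finally show "norm (?t k q) \<le> R * cmod (b_coef \<gamma> \<sigma> L (Suc k))" .
  next
    show "summable (\<lambda>k. R * cmod (b_coef \<gamma> \<sigma> L (Suc k)))" by (rule summable_mult[OF b_summable[OF g sg L]])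
  qed
  have tc: "continuous_on (cball 0 R) (?t k)" for k
    unfolding term_k_def[OF g sg L] C_coef_def by (intro continuous_intros)
  have c1: "continuous_on (cball 0 R) (\<lambda>q. \<Sum>k. ?t k q)"
    by (rule uniform_limit_theorem[OF _ ul]) (auto intro!: always_eventually continuous_on_sum tc)
  have c2: "continuous_on (cball 0 R) (\<lambda>q::(real\<times>real)\<times>(real\<times>real). pR \<sigma> L (fst (fst q)) (fst (snd q)))"
    unfolding pR_def by (intro continuous_intros) (use sg L in auto)
  have "continuous_on (cball 0 R) (\<lambda>q. pR \<sigma> L (fst (fst q)) (fst (snd q)) / (2 * pi) + (1 / pi) * (\<Sum>k. ?t k q))"
    by (intro continuous_intros c1 c2) auto
  moreover have "\<And>q. Kf q = pR \<sigma> L (fst (fst q)) (fst (snd q)) / (2 * pi) + (1 / pi) * (\<Sum>k. ?t k q)"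
    unfolding Kf_def by (rule pzd_alt[OF g sg L])
  ultimately show ?thesis by simp
qed

lemma isCont_Kf: "isCont Kf q"
  by (rule continuous_on_interior[OF Kf_cont_ball[of "norm q + 1"]]) (auto simp: interior_cball)

lemma Kf_cont: "continuous_on UNIV Kf"
  by (rule continuous_at_imp_continuous_on) (auto intro: isCont_Kf)

end


lemma exp_moment_Ici: "(\<integral>\<^sup>+x. indicator {0..} x * ennreal (x^k * exp (-x)) \<partial>lborel) = ennreal (fact k)"
  using nn_intergal_power_times_exp_Ici[of k] by (simp add: mult.commute)

lemma exp_moment_abs: "(\<integral>\<^sup>+t. ennreal (\<bar>t\<bar>^k * exp (-\<bar>t\<bar>)) \<partial>lborel) \<le> 2 * ennreal (fact k)"
proof -
  let ?f = "\<lambda>t::real. \<bar>t\<bar>^k * exp (-\<bar>t\<bar>)"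
  let ?g = "\<lambda>t::real. indicator {0..} t * ennreal (?f t)"
  have mg: "?g \<in> borel_measurable borel" by measurable
  have "(\<integral>\<^sup>+t. ennreal (?f t) \<partial>lborel)
      \<le> (\<integral>\<^sup>+t. ?g t + ?g (-t) \<partial>lborel)"
  proof (intro nn_integral_mono)
    fix t :: real
    show "ennreal (?f t) \<le> ?g t + ?g (-t)"
    proof (cases "0 \<le> t")
      case True
      then have "?g t = ennreal (?f t)" by simp
      then show ?thesis by (metis le_iff_add)
    next
      case False
      then have "?g (-t) = ennreal (?f t)" by simp
      then show ?thesis by (metis le_iff_add add.commute)
    qed
  qed
  also have "\<dots> = (\<integral>\<^sup>+t. ?g t \<partial>lborel) + (\<integral>\<^sup>+t. ?g (-t) \<partial>lborel)"
    by (rule nn_integral_add) measurable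
  also have "(\<integral>\<^sup>+t. ?g (-t) \<partial>lborel) = (\<integral>\<^sup>+t. ?g t \<partial>lborel)"
    using nn_integral_real_affine[OF mg, of "-1" 0] by simp
  also have "(\<integral>\<^sup>+t. ?g t \<partial>lborel) = ennreal (fact k)"
      proof -
    have "?g t = indicator {0..} t * ennreal (t^k * exp (-t))" for t
      by (cases "0 \<le> t") auto
    then show ?thesis using exp_moment_Ici[of k] by simp
  qed
  finally show ?thesis by (simp add: mult_2)
qed

lemma exp_moment_abs_shift:
  "(\<integral>\<^sup>+r. ennreal (\<bar>r - c\<bar>^k * exp (-\<bar>r - c\<bar>)) \<partial>lborel) \<le> 2 * ennreal (fact k)"
proof -
  let ?h = "\<lambda>r::real. ennreal (\<bar>r - c\<bar>^k * exp (-\<bar>r - c\<bar>))"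
  have mh: "?h \<in> borel_measurable borel" by measurable
  have "(\<integral>\<^sup>+r. ?h r \<partial>lborel) = (\<integral>\<^sup>+t. ennreal (\<bar>t\<bar>^k * exp (-\<bar>t\<bar>)) \<partial>lborel)"
    using nn_integral_real_affine[OF mh, of 1 c] by simp
  then show ?thesis using exp_moment_abs[of k] by simp
qed


definition Bk :: "real \<Rightarrow> real \<Rightarrow> real \<Rightarrow> real \<Rightarrow> real" where
  "Bk K S r a = K * \<bar>r\<bar> * exp (- ((\<bar>r\<bar> - \<bar>a\<bar>)\<^sup>2 / S))"

definition Qf :: "real \<Rightarrow> real \<Rightarrow> real \<Rightarrow> real \<Rightarrow> ennreal" where
  "Qf K S T a = (\<integral>\<^sup>+ r. indicator {T<..} r * ennreal (r * Bk K S r a) \<partial>lborel)"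

lemma Qf_small:
  assumes K: "0 < K" and S: "0 < S" and T: "0 \<le> T" and a: "2 * \<bar>a\<bar> \<le> T"
  shows "Qf K S T a \<le> ennreal (2 * K * exp (4 * S) * exp (-T))"
proof -
  define c where "c = K * exp (4 * S) * exp (-T)"
  have c: "0 \<le> c" unfolding c_def using K by simp
  have pw: "indicator {T<..} r * ennreal (r * Bk K S r a) \<le> ennreal c * (indicator {0..} r * ennreal (r^2 * exp (-r)))" for r
  proof (cases "T < r")
    case True
    then have r: "0 \<le> r" "T < r" using T by auto
    have h1: "r / 2 \<le> r - \<bar>a\<bar>" using a r by linarith
    have h2: "r^2 / 4 \<le> (r - \<bar>a\<bar>)\<^sup>2"
    proof -
      have "(r/2)^2 \<le> (r - \<bar>a\<bar>)^2" using h1 r by (intro power_mono) auto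
      then show ?thesis by (simp add: power_divide)
    qed
    have h3: "2 * r - 4 * S \<le> r^2 / (4 * S)"
    proof -
      have "0 \<le> (r - 4 * S)^2" by simp
      then have "8 * S * r - 16 * S^2 \<le> r^2" by (simp add: power2_eq_square algebra_simps)
      then show ?thesis using S by (simp add: field_simps power2_eq_square)
    qed
    have "(r - \<bar>a\<bar>)\<^sup>2 / S \<ge> r^2 / (4 * S)" using h2 S by (simp add: field_simps)
    then have "- ((\<bar>r\<bar> - \<bar>a\<bar>)\<^sup>2 / S) \<le> 4 * S - T - r" using h3 r by simp
    then have e: "exp (- ((\<bar>r\<bar> - \<bar>a\<bar>)\<^sup>2 / S)) \<le> exp (4 * S) * exp (-T) * exp (-r)"
      by (simp flip: exp_add)
    have "r * Bk K S r a = K * r^2 * exp (- ((\<bar>r\<bar> - \<bar>a\<bar>)\<^sup>2 / S))"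
      unfolding Bk_def using r by (simp add: power2_eq_square)
    also have "\<dots> \<le> K * r^2 * (exp (4 * S) * exp (-T) * exp (-r))"
      using e K by (intro mult_left_mono) auto
    also have "\<dots> = c * (r^2 * exp (-r))" unfolding c_def by simp
    finally have "r * Bk K S r a \<le> c * (r^2 * exp (-r))" .
    then show ?thesis using r c by (simp add: ennreal_mult[symmetric] ennreal_leI)
  next
    case False then show ?thesis by simp
  qed
  have "Qf K S T a \<le> (\<integral>\<^sup>+ r. ennreal c * (indicator {0..} r * ennreal (r^2 * exp (-r))) \<partial>lborel)"
    unfolding Qf_def by (rule nn_integral_mono) (rule pw)
  also have "\<dots> = ennreal c * (\<integral>\<^sup>+ r. indicator {0..} r * ennreal (r^2 * exp (-r)) \<partial>lborel)"
    by (rule nn_integral_cmult) measurable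
  also have "\<dots> = ennreal c * ennreal 2" using exp_moment_Ici[of 2] by simp
  also have "\<dots> = ennreal (c * 2)" by (subst ennreal_mult) (use c in auto)
  also have "c * 2 = 2 * K * exp (4 * S) * exp (-T)" unfolding c_def by simp
  finally show ?thesis .
qed

lemma Qf_large:
  assumes K: "0 < K" and S: "0 < S" and T: "0 \<le> T"
  shows "Qf K S T a \<le> ennreal (K * exp (S/4) * (8 + 4 * a^2))"
proof -
  define c where "c = K * exp (S/4)"
  have c: "0 \<le> c" unfolding c_def using K by simp
  let ?e = "\<lambda>r. exp (- \<bar>r - \<bar>a\<bar>\<bar>)"
  have pw: "indicator {T<..} r * ennreal (r * Bk K S r a)
      \<le> ennreal (2 * c) * ennreal (\<bar>r - \<bar>a\<bar>\<bar>^2 * ?e r) + ennreal (2 * c * a^2) * ennreal (\<bar>r - \<bar>a\<bar>\<bar>^0 * ?e r)" for r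
  proof (cases "T < r")
    case True
    then have r: "0 \<le> r" using T by auto
    have sq: "r^2 \<le> 2 * \<bar>r - \<bar>a\<bar>\<bar>^2 + 2 * a^2"
    proof -
      have "0 \<le> (r - 2 * \<bar>a\<bar>)^2" by simp
      then show ?thesis by (simp add: power2_eq_square algebra_simps abs_mult_self)
    qed
    have ge: "- ((\<bar>r\<bar> - \<bar>a\<bar>)\<^sup>2 / S) \<le> S/4 - \<bar>r - \<bar>a\<bar>\<bar>"
    proof -
      have "0 \<le> (\<bar>r - \<bar>a\<bar>\<bar> - S/2)^2" by simp
      then have "S * \<bar>r - \<bar>a\<bar>\<bar> - S^2/4 \<le> \<bar>r - \<bar>a\<bar>\<bar>^2" by (simp add: power2_eq_square algebra_simps)
      moreover have "\<bar>r - \<bar>a\<bar>\<bar>^2 = (\<bar>r\<bar> - \<bar>a\<bar>)\<^sup>2" using r by simp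
      ultimately have "S * \<bar>r - \<bar>a\<bar>\<bar> - S^2/4 \<le> (\<bar>r\<bar> - \<bar>a\<bar>)\<^sup>2" by simp
      then show ?thesis using S by (simp add: field_simps power2_eq_square)
    qed
    then have e: "exp (- ((\<bar>r\<bar> - \<bar>a\<bar>)\<^sup>2 / S)) \<le> exp (S/4) * ?e r" by (simp flip: exp_add)
    have "r * Bk K S r a = K * r^2 * exp (- ((\<bar>r\<bar> - \<bar>a\<bar>)\<^sup>2 / S))"
      unfolding Bk_def using r by (simp add: power2_eq_square)
    also have "\<dots> \<le> K * (2 * \<bar>r - \<bar>a\<bar>\<bar>^2 + 2 * a^2) * (exp (S/4) * ?e r)"
      using e sq K by (intro mult_mono) auto
    also have "\<dots> = (2 * c) * (\<bar>r - \<bar>a\<bar>\<bar>^2 * ?e r) + (2 * c * a^2) * (\<bar>r - \<bar>a\<bar>\<bar>^0 * ?e r)"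
      unfolding c_def by (simp add: algebra_simps)
    finally have le: "r * Bk K S r a \<le> (2 * c) * (\<bar>r - \<bar>a\<bar>\<bar>^2 * ?e r) + (2 * c * a^2) * (\<bar>r - \<bar>a\<bar>\<bar>^0 * ?e r)" .
    have "indicator {T<..} r * ennreal (r * Bk K S r a) = ennreal (r * Bk K S r a)" using True by simp
    also have "\<dots> \<le> ennreal ((2 * c) * (\<bar>r - \<bar>a\<bar>\<bar>^2 * ?e r) + (2 * c * a^2) * (\<bar>r - \<bar>a\<bar>\<bar>^0 * ?e r))"
      by (rule ennreal_leI[OF le])
    also have "\<dots> = ennreal ((2 * c) * (\<bar>r - \<bar>a\<bar>\<bar>^2 * ?e r)) + ennreal ((2 * c * a^2) * (\<bar>r - \<bar>a\<bar>\<bar>^0 * ?e r))"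
      by (rule ennreal_plus) (use c in auto)
    also have "ennreal ((2 * c) * (\<bar>r - \<bar>a\<bar>\<bar>^2 * ?e r)) = ennreal (2 * c) * ennreal (\<bar>r - \<bar>a\<bar>\<bar>^2 * ?e r)"
      by (rule ennreal_mult) (use c in auto)
    also have "ennreal ((2 * c * a^2) * (\<bar>r - \<bar>a\<bar>\<bar>^0 * ?e r)) = ennreal (2 * c * a^2) * ennreal (\<bar>r - \<bar>a\<bar>\<bar>^0 * ?e r)"
      by (rule ennreal_mult) (use c in auto)
    finally show ?thesis .
  next
    case False then show ?thesis by simp
  qed
  have "Qf K S T a \<le> (\<integral>\<^sup>+ r. ennreal (2 * c) * ennreal (\<bar>r - \<bar>a\<bar>\<bar>^2 * ?e r) + ennreal (2 * c * a^2) * ennreal (\<bar>r - \<bar>a\<bar>\<bar>^0 * ?e r) \<partial>lborel)"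
    unfolding Qf_def by (rule nn_integral_mono) (rule pw)
  also have "\<dots> = (\<integral>\<^sup>+ r. ennreal (2 * c) * ennreal (\<bar>r - \<bar>a\<bar>\<bar>^2 * ?e r) \<partial>lborel)
       + (\<integral>\<^sup>+ r. ennreal (2 * c * a^2) * ennreal (\<bar>r - \<bar>a\<bar>\<bar>^0 * ?e r) \<partial>lborel)"
    by (rule nn_integral_add; measurable)
  also have "(\<integral>\<^sup>+ r. ennreal (2 * c) * ennreal (\<bar>r - \<bar>a\<bar>\<bar>^2 * ?e r) \<partial>lborel)
      = ennreal (2 * c) * (\<integral>\<^sup>+ r. ennreal (\<bar>r - \<bar>a\<bar>\<bar>^2 * ?e r) \<partial>lborel)"
    by (rule nn_integral_cmult) measurable
  also have "(\<integral>\<^sup>+ r. ennreal (2 * c * a^2) * ennreal (\<bar>r - \<bar>a\<bar>\<bar>^0 * ?e r) \<partial>lborel)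
      = ennreal (2 * c * a^2) * (\<integral>\<^sup>+ r. ennreal (\<bar>r - \<bar>a\<bar>\<bar>^0 * ?e r) \<partial>lborel)"
    by (rule nn_integral_cmult) measurable
  also have "ennreal (2 * c) * (\<integral>\<^sup>+ r. ennreal (\<bar>r - \<bar>a\<bar>\<bar>^2 * ?e r) \<partial>lborel)
       + ennreal (2 * c * a^2) * (\<integral>\<^sup>+ r. ennreal (\<bar>r - \<bar>a\<bar>\<bar>^0 * ?e r) \<partial>lborel)
      \<le> ennreal (2 * c) * (2 * ennreal (fact 2)) + ennreal (2 * c * a^2) * (2 * ennreal (fact 0))"
    by (intro add_mono mult_left_mono exp_moment_abs_shift) auto
  also have "2 * ennreal (fact 2) = ennreal 4"
  proof -
    have "2 * ennreal (fact 2) = ennreal 2 * ennreal 2" by simp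
    also have "\<dots> = ennreal (2 * 2)" by (rule ennreal_mult[symmetric]) auto
    finally show ?thesis by simp
  qed
  also have "2 * ennreal (fact 0) = ennreal 2" by simp
  also have "ennreal (2 * c) * ennreal 4 + ennreal (2 * c * a^2) * ennreal 2 = ennreal (K * exp (S/4) * (8 + 4 * a^2))"
  proof -
    have "ennreal (2 * c) * ennreal 4 = ennreal (8 * c)" by (subst ennreal_mult[symmetric]) (use c in auto)
    moreover have "ennreal (2 * c * a^2) * ennreal 2 = ennreal (4 * c * a^2)" by (subst ennreal_mult[symmetric]) (use c in auto)
    moreover have "ennreal (8 * c) + ennreal (4 * c * a^2) = ennreal (8 * c + 4 * c * a^2)" by (rule ennreal_plus[symmetric]) (use c in auto)
    moreover have "8 * c + 4 * c * a^2 = K * exp (S/4) * (8 + 4 * a^2)" unfolding c_def by (simp add: algebra_simps)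
    ultimately show ?thesis by simp
  qed
  finally show ?thesis .
qed


lemma input_distsD:
  assumes "F \<in> input_dists"
  shows "prob_space F" "sets F = sets borel" "AE x in F. 0 \<le> fst x" "AE x in F. snd x \<in> {0..<2*pi}"
  using assms unfolding input_dists_def by auto

context
  fixes \<gamma> \<sigma> L :: real
  assumes g: "0 < \<gamma>" and sg: "0 < \<sigma>" and L: "0 < L"
begin

abbreviation "KK \<equiv> Kf \<gamma> \<sigma> L"
abbreviation "SV \<equiv> sv \<sigma> L"
abbreviation "KP \<equiv> kap \<gamma> \<sigma> L"
abbreviation "BB \<equiv> Bk KP SV"

lemma SV_pos: "0 < SV" by (rule sv_pos[OF g sg L])
lemma KP_pos: "0 < KP" by (rule kap_pos[OF g sg L])

lemma KK_meas[measurable]: "KK \<in> borel_measurable borel"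
  by (rule borel_measurable_continuous_onI[OF Kf_cont[OF g sg L]])

lemma KK_bound: "\<bar>KK (p, x)\<bar> \<le> BB (fst p) (fst x)"
  unfolding Kf_def[OF g sg L] Bk_def using pzd_bound[OF g sg L, of "fst p" "snd p" "fst x" "snd x"] by simp

lemma BB_le: "BB r a \<le> KP * \<bar>r\<bar>"
proof -
  have "0 \<le> (\<bar>r\<bar> - \<bar>a\<bar>)\<^sup>2 / SV" using SV_pos by simp
  then have "exp (- ((\<bar>r\<bar> - \<bar>a\<bar>)\<^sup>2 / SV)) \<le> 1" by simp
  then show ?thesis unfolding Bk_def using KP_pos
    by (metis abs_ge_zero mult_left_mono mult_nonneg_nonneg less_imp_le mult.right_neutral)
qed

lemma BB_nonneg: "0 \<le> BB r a" unfolding Bk_def using KP_pos by simp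

lemma KK_p_cont: "continuous_on UNIV (\<lambda>x. KK (p, x))"
  by (rule continuous_on_compose2[OF Kf_cont[OF g sg L]]) (auto intro!: continuous_intros)

lemma KK_p_meas: "(\<lambda>x. KK (p, x)) \<in> borel_measurable borel"
  by (rule borel_measurable_continuous_onI[OF KK_p_cont])

lemma BB_fst_meas: "(\<lambda>x::real\<times>real. BB r (fst x)) \<in> borel_measurable borel"
  by (rule borel_measurable_continuous_onI) (use SV_pos in \<open>auto simp: Bk_def intro!: continuous_intros\<close>)

context
  fixes F :: "(real \<times> real) measure"
  assumes F: "F \<in> input_dists"
begin

interpretation P: prob_space F by (rule input_distsD(1)[OF F])

lemma sF: "sets F = sets borel" by (rule input_distsD(2)[OF F])

lemma meas_F: assumes "f \<in> borel_measurable borel" shows "f \<in> borel_measurable F"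
  by (subst measurable_cong_sets[OF sF refl]) (rule assms)

lemma KK_int: "integrable F (\<lambda>x. KK (p, x))"
proof (rule P.integrable_const_bound[where B="KP * \<bar>fst p\<bar>"])
  show "AE x in F. norm (KK (p, x)) \<le> KP * \<bar>fst p\<bar>"
    by (intro AE_I2) (simp add: order.trans[OF KK_bound BB_le])
  show "(\<lambda>x. KK (p, x)) \<in> borel_measurable F" by (rule meas_F[OF KK_p_meas])
qed

lemma BB_int: "integrable F (\<lambda>x. BB r (fst x))"
proof (rule P.integrable_const_bound[where B="KP * \<bar>r\<bar>"])
  show "AE x in F. norm (BB r (fst x)) \<le> KP * \<bar>r\<bar>"
    using BB_le BB_nonneg by auto
  show "(\<lambda>x. BB r (fst x)) \<in> borel_measurable F" by (rule meas_F[OF BB_fst_meas])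
qed

lemma od_eq: "out_density \<gamma> \<sigma> L F r \<phi> = (\<integral>x. KK ((r, \<phi>), x) \<partial>F)"
  unfolding out_density_def Kf_def[OF g sg L] by simp

lemma od_bound: "\<bar>out_density \<gamma> \<sigma> L F r \<phi>\<bar> \<le> (\<integral>x. BB r (fst x) \<partial>F)"
  unfolding od_eq by (rule integral_abs_bound_integral[OF KK_int BB_int]) (use KK_bound[of "(r, \<phi>)"] in simp)

lemma int_BB_le: "(\<integral>x. BB r (fst x) \<partial>F) \<le> KP * \<bar>r\<bar>"
proof -
  have "(\<integral>x. BB r (fst x) \<partial>F) \<le> (\<integral>x. KP * \<bar>r\<bar> \<partial>F)"
    by (rule integral_mono[OF BB_int]) (auto intro: BB_le)
  then show ?thesis by (simp add: P.prob_space)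
qed

lemma od_bound2: "\<bar>out_density \<gamma> \<sigma> L F r \<phi>\<bar> \<le> KP * \<bar>r\<bar>"
  using od_bound int_BB_le by (rule order.trans)

lemma od_meas: "(\<lambda>y. out_density \<gamma> \<sigma> L F (fst y) (snd y)) \<in> borel_measurable lborel"
proof -
  have m: "case_prod (\<lambda>y x. KK (y, x)) \<in> borel_measurable (lborel \<Otimes>\<^sub>M F)"
  proof -
    have k: "KK \<in> borel_measurable (borel \<Otimes>\<^sub>M borel)" unfolding borel_prod by (rule KK_meas)
    have eq: "borel_measurable (lborel \<Otimes>\<^sub>M F) = borel_measurable (borel \<Otimes>\<^sub>M borel)"
      by (rule measurable_cong_sets) (simp_all add: sF cong: sets_pair_measure_cong)
    have e2: "(\<lambda>(y, x). KK (y, x)) = KK" by (rule ext) auto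
    show ?thesis unfolding e2 by (subst eq) (rule k)
  qed
  have "(\<lambda>y. \<integral>x. KK (y, x) \<partial>F) \<in> borel_measurable lborel"
    by (rule P.borel_measurable_lebesgue_integral[OF m])
  then show ?thesis by (simp add: od_eq)
qed

end

lemma od_conv:
  assumes Fn: "\<And>n. Fn n \<in> input_dists" and F: "F \<in> input_dists" and w: "weak_conv_seq Fn F"
  shows "(\<lambda>n. out_density \<gamma> \<sigma> L (Fn n) r \<phi>) \<longlonglongrightarrow> out_density \<gamma> \<sigma> L F r \<phi>"
proof -
  let ?f = "\<lambda>x. KK ((r, \<phi>), x)"
  have c: "continuous_on UNIV ?f" by (rule KK_p_cont)
  have b: "bounded (range ?f)"
  proof -
    have "norm (?f x) \<le> KP * \<bar>r\<bar>" for x using order.trans[OF KK_bound[of "(r,\<phi>)" x, simplified] BB_le[of r "fst x"]] by simp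
    then show ?thesis unfolding bounded_iff by blast
  qed
  have "(\<lambda>n. \<integral>x. ?f x \<partial>(Fn n)) \<longlonglongrightarrow> (\<integral>x. ?f x \<partial>F)"
    using w c b unfolding weak_conv_seq_def by blast
  then show ?thesis using od_eq[OF Fn] od_eq[OF F] by simp
qed

end


lemma ln_abs_eq: "ln \<bar>x::real\<bar> = ln x"
proof (cases "x = 0")
  case False
  then show ?thesis using abs_raw_ln[of x] abs_raw_ln[of "\<bar>x\<bar>"] by simp
qed simp

lemma xlnx_tendsto0: "((\<lambda>x::real. x * ln x) \<longlongrightarrow> 0) (at 0)"
proof -
  have r: "((\<lambda>x::real. x * ln x) \<longlongrightarrow> 0) (at_right 0)" by real_asymp
  have l0: "((\<lambda>x::real. x * ln (-x)) \<longlongrightarrow> 0) (at_left 0)" by real_asymp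
  have l: "((\<lambda>x::real. x * ln x) \<longlongrightarrow> 0) (at_left 0)"
  proof (rule Lim_transform_eventually[OF l0])
    show "\<forall>\<^sub>F x in at_left 0. x * ln (- x) = x * ln (x::real)"
      using ln_abs_eq by (intro always_eventually) (metis abs_minus_cancel abs_minus_commute ln_abs_eq minus_diff_eq)
  qed
  show ?thesis using r l by (simp add: filterlim_split_at)
qed

lemma isCont_xlnx: "isCont (\<lambda>x::real. x * ln x) x"
proof (cases "x = 0")
  case True
  then show ?thesis using xlnx_tendsto0 unfolding isCont_def by simp
next
  case False
  have "isCont (\<lambda>x::real. x * ln \<bar>x\<bar>) x" using False by (intro continuous_intros) auto
  then show ?thesis by (simp add: ln_abs_eq)
qed

lemma xlnx_bound:
  fixes x E r K :: real
  assumes r: "0 \<le> r" and xE: "\<bar>x\<bar> \<le> E" and EK: "E \<le> K * r" and K: "0 \<le> K"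
  shows "\<bar>x * ln x\<bar> \<le> (2 + K) * r * E + exp (- 2 * r)"
proof -
  define u where "u = \<bar>x\<bar>"
  have u0: "0 \<le> u" unfolding u_def by simp
  have eq: "\<bar>x * ln x\<bar> = u * \<bar>ln u\<bar>" unfolding u_def by (simp add: abs_mult ln_abs_eq)
  have E0: "0 \<le> E" using xE by linarith
  have rE: "0 \<le> r * E" using r E0 by simp
  show ?thesis
  proof (cases "u = 0")
    case True
    then have "x = 0" unfolding u_def by simp
    moreover have "0 \<le> (2 + K) * r * E" using K r E0 by simp
    ultimately show ?thesis by (simp add: add_nonneg_nonneg)
  next
    case False
    then have up: "0 < u" using u0 by simp
    show ?thesis
    proof (cases "u \<le> 1")
      case True
      have ln0: "ln u \<le> 0" using up True by simp
      have yp: "0 < exp (- 2 * r) / u" using up by simp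
      have "ln (exp (- 2 * r) / u) \<le> exp (- 2 * r) / u - 1" by (rule ln_le_minus_one[OF yp])
      then have "- 2 * r - ln u \<le> exp (- 2 * r) / u - 1" using up by (simp add: ln_div)
      then have "u * (- 2 * r - ln u) \<le> u * (exp (- 2 * r) / u - 1)" using up by (intro mult_left_mono) auto
      then have "- (u * ln u) \<le> 2 * r * u + exp (- 2 * r) - u" using up by (simp add: algebra_simps)
      moreover have "2 * r * u \<le> (2 + K) * r * E"
      proof -
        have "2 * r * u \<le> 2 * r * E" using xE r unfolding u_def by (intro mult_left_mono) auto
        also have "\<dots> \<le> (2 + K) * r * E" using mult_nonneg_nonneg[OF K rE] by (simp add: algebra_simps)
        finally show ?thesis .
      qed
      moreover have "u * \<bar>ln u\<bar> = - (u * ln u)" using ln0 by simp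
      ultimately show ?thesis unfolding eq using up by linarith
    next
      case False
      then have u1: "1 < u" by simp
      have lnp: "0 < ln u" using u1 by simp
      have "u \<le> K * r" using xE EK unfolding u_def by linarith
      then have "ln u \<le> ln (K * r)" using up by simp
      also have "\<dots> \<le> K * r - 1" using \<open>u \<le> K * r\<close> up by (intro ln_le_minus_one) linarith
      finally have "ln u \<le> K * r" by simp
      then have "u * ln u \<le> u * (K * r)" using up by (intro mult_left_mono) auto
      also have "\<dots> \<le> E * (K * r)" using xE K r unfolding u_def by (intro mult_right_mono) auto
      also have "\<dots> \<le> (2 + K) * r * E" using rE by (simp add: algebra_simps)
      finally show ?thesis unfolding eq using lnp by (simp add: add_increasing2)
    qed
  qed
qed


lemma fst_borel_rr[measurable]: "(fst :: real \<times> real \<Rightarrow> real) \<in> borel_measurable borel"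
  by (rule borel_measurable_continuous_onI) (intro continuous_intros)
lemma snd_borel_rr[measurable]: "(snd :: real \<times> real \<Rightarrow> real) \<in> borel_measurable borel"
  by (rule borel_measurable_continuous_onI) (intro continuous_intros)
lemma fst_borel_rrr[measurable]: "(fst :: real \<times> (real \<times> real) \<Rightarrow> real) \<in> borel_measurable borel"
  by (rule borel_measurable_continuous_onI) (intro continuous_intros)

definition Om :: "(real \<times> real) set" where "Om = {0..} \<times> {0..<2*pi}"

context
  fixes \<gamma> \<sigma> L :: real
  assumes g: "0 < \<gamma>" and sg: "0 < \<sigma>" and L: "0 < L"
begin

abbreviation "SV' \<equiv> sv \<sigma> L"
abbreviation "KP' \<equiv> kap \<gamma> \<sigma> L"
abbreviation "BB' \<equiv> Bk KP' SV'"

definition "DD F y = out_density \<gamma> \<sigma> L F (fst y) (snd y)"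
definition "gF F y = indicator Om y * (DD F y * ln (DD F y))"
definition "EF F r = (\<integral>x. BB' r (fst x) \<partial>F)"

lemma SV'_pos: "0 < SV'" by (rule sv_pos[OF g sg L])
lemma KP'_pos: "0 < KP'" by (rule kap_pos[OF g sg L])

lemma BBc: "continuous_on UNIV (\<lambda>p::real \<times> (real \<times> real). BB' (fst p) (fst (snd p)))"
  using SV'_pos by (auto simp: Bk_def intro!: continuous_intros)

lemma Om_meas[measurable]: "Om \<in> sets borel"
proof -
  have "Om = {y. 0 \<le> fst y} \<inter> {y. snd y \<in> {0..<2*pi}}" unfolding Om_def by auto
  also have "\<dots> \<in> sets borel" by measurable
  finally show ?thesis .
qed

context
  fixes F :: "(real \<times> real) measure"
  assumes F: "F \<in> input_dists"
begin

interpretation P: prob_space F by (rule input_distsD(1)[OF F])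

lemma sF': "sets F = sets borel" by (rule input_distsD(2)[OF F])

lemma DD_meas[measurable]: "DD F \<in> borel_measurable borel"
  using od_meas[OF g sg L F] unfolding DD_def by simp

lemma gF_meas[measurable]: "gF F \<in> borel_measurable borel"
  unfolding gF_def by measurable

lemma EF_meas[measurable]: "EF F \<in> borel_measurable borel"
proof -
  have eq: "borel_measurable (lborel \<Otimes>\<^sub>M F) = borel_measurable (borel \<Otimes>\<^sub>M borel)"
    by (rule measurable_cong_sets) (simp_all add: sF' cong: sets_pair_measure_cong)
  have "(\<lambda>p::real \<times> (real \<times> real). BB' (fst p) (fst (snd p))) \<in> borel_measurable (borel \<Otimes>\<^sub>M borel)"
    unfolding borel_prod by (rule borel_measurable_continuous_onI[OF BBc])
  then have "(\<lambda>(r, x). BB' r (fst x)) \<in> borel_measurable (lborel \<Otimes>\<^sub>M F)"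
    unfolding eq by (simp add: case_prod_beta)
  then have "(\<lambda>r. \<integral>x. BB' r (fst x) \<partial>F) \<in> borel_measurable lborel"
    by (rule P.borel_measurable_lebesgue_integral)
  then show ?thesis unfolding EF_def[abs_def] by simp
qed

lemma gF_pw:
  assumes T: "0 \<le> T"
  shows "indicator {y. T < fst y} y * ennreal \<bar>gF F y\<bar>
     \<le> indicator {0..<2*pi} (snd y) * (indicator {T<..} (fst y) *
          ennreal ((2 + KP') * fst y * EF F (fst y) + exp (- 2 * fst y)))"
proof (cases "y \<in> Om \<and> T < fst y")
  case True
  then have r: "0 \<le> fst y" "T < fst y" "snd y \<in> {0..<2*pi}" using T unfolding Om_def by auto
  have xE: "\<bar>DD F y\<bar> \<le> EF F (fst y)"
    unfolding DD_def EF_def using od_bound[OF g sg L F] by simp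
  have EK: "EF F (fst y) \<le> KP' * fst y"
    unfolding EF_def using int_BB_le[OF g sg L F, of "fst y"] r by simp
  have "\<bar>gF F y\<bar> = \<bar>DD F y * ln (DD F y)\<bar>" unfolding gF_def using True by simp
  also have "\<dots> \<le> (2 + KP') * fst y * EF F (fst y) + exp (- 2 * fst y)"
    by (rule xlnx_bound[OF r(1) xE EK]) (use KP'_pos in simp)
  finally show ?thesis using r by (simp add: ennreal_leI)
next
  case False
  have z: "indicator {y. T < fst y} y * ennreal \<bar>gF F y\<bar> = 0" using False unfolding gF_def by auto
  show ?thesis unfolding z by simp
qed

definition "GF r = (2 + KP') * r * EF F r + exp (- 2 * r)"

lemma GF_meas[measurable]: "GF \<in> borel_measurable borel"
  unfolding GF_def[abs_def] by measurable

lemma tail1: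
  assumes T: "0 \<le> T"
  shows "(\<integral>\<^sup>+y. indicator {y. T < fst y} y * ennreal \<bar>gF F y\<bar> \<partial>lborel)
     \<le> ennreal (2*pi) * (\<integral>\<^sup>+r. indicator {T<..} r * ennreal (GF r) \<partial>lborel)"
proof -
  have "(\<integral>\<^sup>+y. indicator {y. T < fst y} y * ennreal \<bar>gF F y\<bar> \<partial>lborel)
     \<le> (\<integral>\<^sup>+y. indicator {0..<2*pi} (snd y) * (indicator {T<..} (fst y) * ennreal (GF (fst y))) \<partial>lborel)"
    by (rule nn_integral_mono) (use gF_pw[OF T] in \<open>simp add: GF_def\<close>)
  also have "\<dots> = (\<integral>\<^sup>+y. indicator {0..<2*pi} (snd y) * (indicator {T<..} (fst y) * ennreal (GF (fst y))) \<partial>(lborel \<Otimes>\<^sub>M lborel))"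
    by (simp only: lborel_prod)
  also have "\<dots> = (\<integral>\<^sup>+r. \<integral>\<^sup>+\<phi>. indicator {0..<2*pi} \<phi> * (indicator {T<..} r * ennreal (GF r)) \<partial>lborel \<partial>lborel)"
    by (rule lborel.nn_integral_fst[symmetric, where f="\<lambda>y. indicator {0..<2*pi} (snd y) * (indicator {T<..} (fst y) * ennreal (GF (fst y)))", simplified]) measurable
  also have "\<dots> = (\<integral>\<^sup>+r. (indicator {T<..} r * ennreal (GF r)) * ennreal (2*pi) \<partial>lborel)"
  proof (rule nn_integral_cong)
    fix r :: real
    have "(\<integral>\<^sup>+\<phi>. indicator {0..<2*pi} \<phi> * (indicator {T<..} r * ennreal (GF r)) \<partial>lborel)
        = (\<integral>\<^sup>+\<phi>. (indicator {T<..} r * ennreal (GF r)) * indicator {0..<2*pi} \<phi> \<partial>lborel)"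
      by (simp add: mult.commute)
    also have "\<dots> = (indicator {T<..} r * ennreal (GF r)) * emeasure lborel {0..<2*pi}"
      by (rule nn_integral_cmult_indicator) simp
    also have "emeasure lborel {0..<2*pi} = ennreal (2*pi)" by simp
    finally show "(\<integral>\<^sup>+\<phi>. indicator {0..<2*pi} \<phi> * (indicator {T<..} r * ennreal (GF r)) \<partial>lborel)
        = (indicator {T<..} r * ennreal (GF r)) * ennreal (2*pi)" .
  qed
  also have "\<dots> = ennreal (2*pi) * (\<integral>\<^sup>+r. indicator {T<..} r * ennreal (GF r) \<partial>lborel)"
    by (subst nn_integral_multc) (measurable, simp add: mult.commute)
  finally show ?thesis .
qed

lemma fstF[measurable]: "(fst :: real \<times> real \<Rightarrow> real) \<in> borel_measurable F"
  by (subst measurable_cong_sets[OF sF' refl]) (rule fst_borel_rr)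

lemma EF_nonneg: "0 \<le> EF F r"
  unfolding EF_def by (rule integral_nonneg_AE) (simp add: BB_nonneg[OF g sg L])

lemma tail2:
  assumes T: "0 \<le> T"
  shows "(\<integral>\<^sup>+r. indicator {T<..} r * ennreal (GF r) \<partial>lborel)
     \<le> (\<integral>\<^sup>+x. ennreal (2 + KP') * Qf KP' SV' T (fst x) \<partial>F) + ennreal (exp (-T))"
proof -
  let ?A = "\<lambda>r. indicator {T<..} r * ennreal ((2 + KP') * r * EF F r)"
  let ?B = "\<lambda>r. indicator {T<..} r * ennreal (exp (- 2 * r))"
  have split: "indicator {T<..} r * ennreal (GF r) = ?A r + ?B r" for r
  proof (cases "T < r")
    case True
    then have "0 \<le> (2 + KP') * r * EF F r" using T KP'_pos EF_nonneg by simp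
    then show ?thesis using True unfolding GF_def by (simp add: ennreal_plus)
  qed simp
  have "(\<integral>\<^sup>+r. indicator {T<..} r * ennreal (GF r) \<partial>lborel) = (\<integral>\<^sup>+r. ?A r \<partial>lborel) + (\<integral>\<^sup>+r. ?B r \<partial>lborel)"
    unfolding split by (rule nn_integral_add; measurable)
  also have "(\<integral>\<^sup>+r. ?B r \<partial>lborel) \<le> ennreal (exp (-T))"
  proof -
    have "(\<integral>\<^sup>+r. ?B r \<partial>lborel) \<le> (\<integral>\<^sup>+r. ennreal (exp (-T)) * (indicator {0..} r * ennreal (r^0 * exp (-r))) \<partial>lborel)"
    proof (rule nn_integral_mono)
      fix r :: real
      show "?B r \<le> ennreal (exp (-T)) * (indicator {0..} r * ennreal (r^0 * exp (-r)))"
      proof (cases "T < r")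
        case True
        then have "exp (- 2 * r) \<le> exp (-T) * exp (-r)" by (simp flip: exp_add)
        then show ?thesis using True T by (simp add: ennreal_leI ennreal_mult[symmetric])
      qed simp
    qed
    also have "\<dots> = ennreal (exp (-T)) * (\<integral>\<^sup>+r. indicator {0..} r * ennreal (r^0 * exp (-r)) \<partial>lborel)"
      by (rule nn_integral_cmult) measurable
    also have "\<dots> = ennreal (exp (-T))" using exp_moment_Ici[of 0] by simp
    finally show ?thesis .
  qed
  also have "(\<integral>\<^sup>+r. ?A r \<partial>lborel) = (\<integral>\<^sup>+r. \<integral>\<^sup>+x. indicator {T<..} r * ennreal ((2 + KP') * (r * BB' r (fst x))) \<partial>F \<partial>lborel)"
  proof (rule nn_integral_cong)
    fix r :: real
    show "?A r = (\<integral>\<^sup>+x. indicator {T<..} r * ennreal ((2 + KP') * (r * BB' r (fst x))) \<partial>F)"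
    proof (cases "T < r")
      case True
      have int: "integrable F (\<lambda>x. (2 + KP') * (r * BB' r (fst x)))"
        using BB_int[OF g sg L F, of r] by simp
      have "(\<integral>\<^sup>+x. ennreal ((2 + KP') * (r * BB' r (fst x))) \<partial>F) = (\<integral>x. (2 + KP') * (r * BB' r (fst x)) \<partial>F)"
        by (rule nn_integral_eq_integral[OF int]) (use True T KP'_pos BB_nonneg[OF g sg L] in simp)
      also have "\<dots> = (2 + KP') * r * EF F r" unfolding EF_def by (simp add: mult.assoc)
      finally show ?thesis using True by simp
    qed simp
  qed
  also have "\<dots> = (\<integral>\<^sup>+x. \<integral>\<^sup>+r. indicator {T<..} r * ennreal ((2 + KP') * (r * BB' r (fst x))) \<partial>lborel \<partial>F)"
  proof -
    interpret PS: pair_sigma_finite F lborel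
      by (intro pair_sigma_finite.intro P.sigma_finite_measure_axioms lborel.sigma_finite_measure_axioms)
    show ?thesis
      by (rule PS.Fubini'[where f="\<lambda>x r. indicator {T<..} r * ennreal ((2 + KP') * (r * BB' r (fst x)))"])
         (unfold Bk_def, measurable)
  qed
  also have "\<dots> = (\<integral>\<^sup>+x. ennreal (2 + KP') * Qf KP' SV' T (fst x) \<partial>F)"
  proof (rule nn_integral_cong)
    fix x :: "real \<times> real"
    have "(\<integral>\<^sup>+r. indicator {T<..} r * ennreal ((2 + KP') * (r * BB' r (fst x))) \<partial>lborel)
        = (\<integral>\<^sup>+r. ennreal (2 + KP') * (indicator {T<..} r * ennreal (r * BB' r (fst x))) \<partial>lborel)"
    proof (intro nn_integral_cong)
      fix r :: real
      have "ennreal ((2 + KP') * (r * BB' r (fst x))) = ennreal (2 + KP') * ennreal (r * BB' r (fst x))"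
        by (rule ennreal_mult') (use KP'_pos in simp)
      then show "indicator {T<..} r * ennreal ((2 + KP') * (r * BB' r (fst x)))
          = ennreal (2 + KP') * (indicator {T<..} r * ennreal (r * BB' r (fst x)))"
        by (metis mult.left_commute)
    qed
    also have "\<dots> = ennreal (2 + KP') * Qf KP' SV' T (fst x)"
      unfolding Qf_def by (rule nn_integral_cmult) (unfold Bk_def, measurable)
    finally show "(\<integral>\<^sup>+r. indicator {T<..} r * ennreal ((2 + KP') * (r * BB' r (fst x))) \<partial>lborel)
        = ennreal (2 + KP') * Qf KP' SV' T (fst x)" .
  qed
  finally show ?thesis by (simp add: add_mono)
qed

definition "UF R = (\<integral>\<^sup>+x. indicator {x. R < \<bar>fst x\<bar>} x * ennreal (8 + 4 * (fst x)\<^sup>2) \<partial>F)"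

lemma tail3:
  assumes R: "0 \<le> R" and T: "2 * R \<le> T"
  shows "(\<integral>\<^sup>+x. ennreal (2 + KP') * Qf KP' SV' T (fst x) \<partial>F)
     \<le> ennreal (2 + KP') * (ennreal (2 * KP' * exp (4 * SV') * exp (-T)) + ennreal (KP' * exp (SV'/4)) * UF R)"
proof -
  let ?c1 = "2 * KP' * exp (4 * SV') * exp (-T)" and ?c2 = "KP' * exp (SV'/4)"
  have T0: "0 \<le> T" using R T by linarith
  have pw: "Qf KP' SV' T (fst x) \<le> ennreal ?c1 + ennreal ?c2 * (indicator {x. R < \<bar>fst x\<bar>} x * ennreal (8 + 4 * (fst x)\<^sup>2))" for x
  proof (cases "R < \<bar>fst x\<bar>")
    case True
    have "Qf KP' SV' T (fst x) \<le> ennreal (?c2 * (8 + 4 * (fst x)^2))"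
      by (rule Qf_large[OF KP'_pos SV'_pos T0])
    also have "\<dots> = ennreal ?c2 * ennreal (8 + 4 * (fst x)\<^sup>2)"
      by (rule ennreal_mult) (use KP'_pos in auto)
    also have "\<dots> \<le> ennreal ?c1 + ennreal ?c2 * (indicator {x. R < \<bar>fst x\<bar>} x * ennreal (8 + 4 * (fst x)\<^sup>2))"
      using True by simp
    finally show ?thesis .
  next
    case False
    then have "2 * \<bar>fst x\<bar> \<le> T" using T by linarith
    then have "Qf KP' SV' T (fst x) \<le> ennreal ?c1" by (rule Qf_small[OF KP'_pos SV'_pos T0])
    then show ?thesis by (simp add: add_increasing2)
  qed
  have "(\<integral>\<^sup>+x. ennreal (2 + KP') * Qf KP' SV' T (fst x) \<partial>F)
     \<le> (\<integral>\<^sup>+x. ennreal (2 + KP') * (ennreal ?c1 + ennreal ?c2 * (indicator {x. R < \<bar>fst x\<bar>} x * ennreal (8 + 4 * (fst x)\<^sup>2))) \<partial>F)"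
    by (intro nn_integral_mono mult_left_mono pw) auto
  also have "\<dots> = ennreal (2 + KP') * (\<integral>\<^sup>+x. ennreal ?c1 + ennreal ?c2 * (indicator {x. R < \<bar>fst x\<bar>} x * ennreal (8 + 4 * (fst x)\<^sup>2)) \<partial>F)"
    by (rule nn_integral_cmult) measurable
  also have "(\<integral>\<^sup>+x. ennreal ?c1 + ennreal ?c2 * (indicator {x. R < \<bar>fst x\<bar>} x * ennreal (8 + 4 * (fst x)\<^sup>2)) \<partial>F)
      = (\<integral>\<^sup>+x. ennreal ?c1 \<partial>F) + (\<integral>\<^sup>+x. ennreal ?c2 * (indicator {x. R < \<bar>fst x\<bar>} x * ennreal (8 + 4 * (fst x)\<^sup>2)) \<partial>F)"
    by (rule nn_integral_add; measurable)
  also have "(\<integral>\<^sup>+x. ennreal ?c1 \<partial>F) = ennreal ?c1" by (simp add: P.emeasure_space_1)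
  also have "(\<integral>\<^sup>+x. ennreal ?c2 * (indicator {x. R < \<bar>fst x\<bar>} x * ennreal (8 + 4 * (fst x)\<^sup>2)) \<partial>F) = ennreal ?c2 * UF R"
    unfolding UF_def by (rule nn_integral_cmult) measurable
  finally show ?thesis .
qed

definition "tailR T e = 2 * pi * ((2 + KP') * (2 * KP' * exp (4 * SV') * exp (-T) + KP' * exp (SV'/4) * e) + exp (-T))"

lemma tail_final:
  assumes R: "0 \<le> R" and T: "2 * R \<le> T" and U: "UF R \<le> ennreal e" and e: "0 \<le> e"
  shows "(\<integral>\<^sup>+y. indicator {y. T < fst y} y * ennreal \<bar>gF F y\<bar> \<partial>lborel) \<le> ennreal (tailR T e)"
proof -
  have T0: "0 \<le> T" using R T by linarith
  have k: "0 \<le> KP'" using KP'_pos by simp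
  have "(\<integral>\<^sup>+y. indicator {y. T < fst y} y * ennreal \<bar>gF F y\<bar> \<partial>lborel)
     \<le> ennreal (2*pi) * (\<integral>\<^sup>+r. indicator {T<..} r * ennreal (GF r) \<partial>lborel)" by (rule tail1[OF T0])
  also have "\<dots> \<le> ennreal (2*pi) * ((ennreal (2 + KP') * (ennreal (2 * KP' * exp (4 * SV') * exp (-T))
        + ennreal (KP' * exp (SV'/4)) * ennreal e)) + ennreal (exp (-T)))"
  proof -
    have b: "(\<integral>\<^sup>+x. ennreal (2 + KP') * Qf KP' SV' T (fst x) \<partial>F)
     \<le> ennreal (2 + KP') * (ennreal (2 * KP' * exp (4 * SV') * exp (-T)) + ennreal (KP' * exp (SV'/4)) * ennreal e)"
      using tail3[OF R T] by (rule order.trans) (intro mult_left_mono add_mono U order.refl; simp)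
    show ?thesis using tail2[OF T0] b by (intro mult_left_mono) (auto intro: order.trans add_mono)
  qed
  also have "\<dots> = ennreal (tailR T e)"
    unfolding tailR_def using k e
    by (simp add: ennreal_mult[symmetric] ennreal_plus[symmetric] del: ennreal_plus)
  finally show ?thesis .
qed

lemma tailR_nonneg: "0 \<le> e \<Longrightarrow> 0 \<le> tailR T e"
  unfolding tailR_def using KP'_pos by (intro mult_nonneg_nonneg add_nonneg_nonneg) auto

lemma compact_bound:
  assumes T: "0 \<le> T"
  shows "\<bar>indicator {y. fst y \<le> T} y * gF F y\<bar> \<le> indicator (cbox (0,0) (T, 2*pi)) y * ((2 + KP') * KP' * T\<^sup>2 + 1)"
proof (cases "y \<in> Om \<and> fst y \<le> T")
  case True
  then have r: "0 \<le> fst y" "fst y \<le> T" "snd y \<in> {0..<2*pi}" unfolding Om_def by auto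
  have yc: "y \<in> cbox (0,0) (T, 2*pi)" using r by (cases y) (auto simp: cbox_Pair_eq)
  have xE: "\<bar>DD F y\<bar> \<le> EF F (fst y)"
    unfolding DD_def EF_def using od_bound[OF g sg L F] by simp
  have EK: "EF F (fst y) \<le> KP' * fst y"
    unfolding EF_def using int_BB_le[OF g sg L F, of "fst y"] r by simp
  have "\<bar>gF F y\<bar> = \<bar>DD F y * ln (DD F y)\<bar>" unfolding gF_def using True by simp
  also have "\<dots> \<le> (2 + KP') * fst y * EF F (fst y) + exp (- 2 * fst y)"
    by (rule xlnx_bound[OF r(1) xE EK]) (use KP'_pos in simp)
  also have "\<dots> \<le> (2 + KP') * KP' * T\<^sup>2 + 1"
  proof -
    have "EF F (fst y) \<le> KP' * T" using EK r KP'_pos by (meson mult_left_mono less_imp_le order.trans)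
    then have "(2 + KP') * fst y * EF F (fst y) \<le> (2 + KP') * T * (KP' * T)"
      using r KP'_pos EF_nonneg by (intro mult_mono) auto
    then have A: "(2 + KP') * fst y * EF F (fst y) \<le> (2 + KP') * KP' * T\<^sup>2"
      by (simp add: power2_eq_square mult_ac)
    have B: "exp (- 2 * fst y) \<le> 1" using r by simp
    from A B show ?thesis by linarith
  qed
  finally show ?thesis using True yc by simp
next
  case False
  have z: "indicator {y. fst y \<le> T} y * gF F y = 0" using False unfolding gF_def by auto
  show ?thesis unfolding z using KP'_pos by simp
qed

lemma gF_parts_meas:
  "(\<lambda>y. indicator {y. fst y \<le> T} y * gF F y) \<in> borel_measurable lborel"
  "(\<lambda>y. indicator {y. T < fst y} y * gF F y) \<in> borel_measurable lborel"
  by measurable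

lemma part1_int:
  assumes T: "0 \<le> T"
  shows "integrable lborel (\<lambda>y. indicator {y. fst y \<le> T} y * gF F y)"
proof (rule Bochner_Integration.integrable_bound[OF _ gF_parts_meas(1)])
  show "integrable lborel (\<lambda>y. indicator (cbox (0,0) (T, 2*pi)) y * ((2 + KP') * KP' * T\<^sup>2 + 1))"
    by (intro integrable_mult_left integrable_real_indicator emeasure_lborel_cbox_finite) simp
  show "AE x in lborel. norm (indicator {y. fst y \<le> T} x * gF F x)
          \<le> norm (indicator (cbox (0,0) (T, 2*pi)) x * ((2 + KP') * KP' * T\<^sup>2 + 1))"
    using compact_bound[OF T] by (intro AE_I2) (simp add: order.trans[OF _ abs_ge_self])
qed

lemma part2_int:
  assumes R: "0 \<le> R" and T: "2 * R \<le> T" and U: "UF R \<le> ennreal e" and e: "0 \<le> e"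
  shows "integrable lborel (\<lambda>y. indicator {y. T < fst y} y * gF F y)"
    and "\<bar>\<integral>y. indicator {y. T < fst y} y * gF F y \<partial>lborel\<bar> \<le> tailR T e"
proof -
  have n: "(\<integral>\<^sup>+y. norm (indicator {y. T < fst y} y * gF F y) \<partial>lborel)
      = (\<integral>\<^sup>+y. indicator {y. T < fst y} y * ennreal \<bar>gF F y\<bar> \<partial>lborel)"
    by (intro nn_integral_cong) (auto split: split_indicator)
  have b: "(\<integral>\<^sup>+y. norm (indicator {y. T < fst y} y * gF F y) \<partial>lborel) \<le> ennreal (tailR T e)"
    unfolding n by (rule tail_final[OF R T U e])
  show int: "integrable lborel (\<lambda>y. indicator {y. T < fst y} y * gF F y)"
    by (rule integrableI_bounded[OF gF_parts_meas(2)]) (use b in \<open>auto simp: top_unique less_top[symmetric] intro: le_less_trans\<close>)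
  have "ennreal (norm (\<integral>y. indicator {y. T < fst y} y * gF F y \<partial>lborel)) \<le> ennreal (tailR T e)"
    using integral_norm_bound_ennreal[OF int] b by (rule order.trans)
  then show "\<bar>\<integral>y. indicator {y. T < fst y} y * gF F y \<partial>lborel\<bar> \<le> tailR T e"
    using tailR_nonneg[OF e] by (simp add: ennreal_le_iff)
qed

lemma gF_decomp: "gF F y = indicator {y. fst y \<le> T} y * gF F y + indicator {y. T < fst y} y * gF F y"
  by (auto split: split_indicator)

lemma gF_int:
  assumes R: "0 \<le> R" and U: "UF R \<le> ennreal e" and e: "0 \<le> e"
  shows "integrable lborel (gF F)"
proof -
  have "integrable lborel (\<lambda>y. indicator {y. fst y \<le> 2*R} y * gF F y + indicator {y. 2*R < fst y} y * gF F y)"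
    using part1_int[of "2*R"] part2_int(1)[OF R order.refl U e] R by simp
  then show ?thesis by (subst (asm) gF_decomp[symmetric, abs_def])
qed

lemma gF_split_bound:
  assumes R: "0 \<le> R" and T: "2 * R \<le> T" and U: "UF R \<le> ennreal e" and e: "0 \<le> e"
  shows "\<bar>(\<integral>y. gF F y \<partial>lborel) - (\<integral>y. indicator {y. fst y \<le> T} y * gF F y \<partial>lborel)\<bar> \<le> tailR T e"
proof -
  have T0: "0 \<le> T" using R T by linarith
  have "(\<integral>y. gF F y \<partial>lborel) = (\<integral>y. indicator {y. fst y \<le> T} y * gF F y + indicator {y. T < fst y} y * gF F y \<partial>lborel)"
    by (subst gF_decomp[of _ T]) (rule refl)
  also have "\<dots> = (\<integral>y. indicator {y. fst y \<le> T} y * gF F y \<partial>lborel) + (\<integral>y. indicator {y. T < fst y} y * gF F y \<partial>lborel)"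
    by (rule Bochner_Integration.integral_add[OF part1_int[OF T0] part2_int(1)[OF R T U e]])
  finally show ?thesis using part2_int(2)[OF R T U e] by simp
qed

end

end


context
  fixes \<gamma> \<sigma> L :: real
  assumes g: "0 < \<gamma>" and sg: "0 < \<sigma>" and L: "0 < L"
begin

lemma oe_eq: "out_entropy \<gamma> \<sigma> L F = - (\<integral>y. gF \<gamma> \<sigma> L F y \<partial>lborel)"
  unfolding out_entropy_def set_lebesgue_integral_def gF_def[OF g sg L] DD_def[OF g sg L] Om_def
  by simp

lemma core:
  assumes S: "S \<subseteq> input_dists"
    and UT: "\<And>e. 0 < e \<Longrightarrow> \<exists>R\<ge>0. \<forall>F\<in>S. UF F R \<le> ennreal e"
  shows "weakly_continuous_on S (out_entropy \<gamma> \<sigma> L)"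
  unfolding weakly_continuous_on_def
proof (intro allI impI, elim conjE)
  fix Fn F assume FnS: "\<forall>n. Fn n \<in> S" and FS: "F \<in> S" and w: "weak_conv_seq Fn F"
  have Fn: "Fn n \<in> input_dists" for n using FnS S by auto
  have F: "F \<in> input_dists" using FS S by auto
  let ?KP = "kap \<gamma> \<sigma> L" and ?SV = "sv \<sigma> L"
  have KP: "0 < ?KP" by (rule kap_pos[OF g sg L])
  let ?I = "\<lambda>F'. \<integral>y. gF \<gamma> \<sigma> L F' y \<partial>lborel"
  have "(\<lambda>n. ?I (Fn n)) \<longlonglongrightarrow> ?I F"
  proof (rule LIMSEQ_I)
    fix \<epsilon> :: real assume \<epsilon>: "0 < \<epsilon>"
    define c2 where "c2 = 2 * pi * (2 + ?KP) * ?KP * exp (?SV/4)"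
    have c2: "0 < c2" unfolding c2_def using KP by simp
    define e1 where "e1 = \<epsilon> / (6 * c2)"
    have e1: "0 < e1" unfolding e1_def using \<epsilon> c2 by simp
    obtain R where R: "0 \<le> R" and RU: "\<And>F'. F' \<in> S \<Longrightarrow> UF F' R \<le> ennreal e1"
      using UT[OF e1] by blast
    define C0 where "C0 = 2 * pi * ((2 + ?KP) * (2 * ?KP * exp (4 * ?SV)) + 1)"
    have C0: "0 < C0" unfolding C0_def using KP by (simp add: add_pos_nonneg)
    define T where "T = max (2 * R) (ln (6 * C0 / \<epsilon>))"
    have T: "2 * R \<le> T" unfolding T_def by simp
    have T0: "0 \<le> T" using R T by linarith
    have eT: "exp (-T) \<le> \<epsilon> / (6 * C0)"
    proof -
      have "ln (6 * C0 / \<epsilon>) \<le> T" unfolding T_def by simp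
      then have "exp (- T) \<le> exp (- ln (6 * C0 / \<epsilon>))" by simp
      also have "\<dots> = \<epsilon> / (6 * C0)" using C0 \<epsilon> by (simp add: exp_minus)
      finally show ?thesis .
    qed
    have tR: "tailR \<gamma> \<sigma> L T e1 \<le> \<epsilon> / 3"
    proof -
      have "tailR \<gamma> \<sigma> L T e1 = C0 * exp (-T) + c2 * e1"
        unfolding tailR_def[OF g sg L F] C0_def c2_def by (simp add: algebra_simps)
      also have "\<dots> \<le> C0 * (\<epsilon> / (6 * C0)) + c2 * e1" using mult_left_mono[OF eT, of C0] C0 by simp
      also have "\<dots> = \<epsilon> / 3" unfolding e1_def using C0 c2 by (simp add: field_simps)
      finally show ?thesis .
    qed
    define W where "W = (\<lambda>y. indicator (cbox (0,0) (T, 2*pi)) y * ((2 + ?KP) * ?KP * T\<^sup>2 + 1))"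
    let ?s = "\<lambda>n y. indicator {y. fst y \<le> T} y * gF \<gamma> \<sigma> L (Fn n) y"
    let ?f = "\<lambda>y. indicator {y. fst y \<le> T} y * gF \<gamma> \<sigma> L F y"
    have dct: "(\<lambda>n. \<integral>y. ?s n y \<partial>lborel) \<longlonglongrightarrow> (\<integral>y. ?f y \<partial>lborel)"
    proof (rule integral_dominated_convergence[where w=W])
      show "?f \<in> borel_measurable lborel" by (rule gF_parts_meas(1)[OF g sg L F])
      show "?s n \<in> borel_measurable lborel" for n by (rule gF_parts_meas(1)[OF g sg L Fn])
      show "integrable lborel W" unfolding W_def
        by (intro integrable_mult_left integrable_real_indicator emeasure_lborel_cbox_finite) simp
      show "AE y in lborel. (\<lambda>n. ?s n y) \<longlonglongrightarrow> ?f y"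
      proof (intro AE_I2)
        fix y :: "real \<times> real"
        have "(\<lambda>n. DD \<gamma> \<sigma> L (Fn n) y) \<longlonglongrightarrow> DD \<gamma> \<sigma> L F y"
          unfolding DD_def[OF g sg L] by (rule od_conv[OF g sg L Fn F w])
        then have "(\<lambda>n. DD \<gamma> \<sigma> L (Fn n) y * ln (DD \<gamma> \<sigma> L (Fn n) y)) \<longlonglongrightarrow> DD \<gamma> \<sigma> L F y * ln (DD \<gamma> \<sigma> L F y)"
          by (rule isCont_tendsto_compose[OF isCont_xlnx])
        then show "(\<lambda>n. ?s n y) \<longlonglongrightarrow> ?f y"
          unfolding gF_def[OF g sg L] by (intro tendsto_mult_left)
      qed
      show "AE y in lborel. norm (?s n y) \<le> W y" for n
        using compact_bound[OF g sg L Fn T0] unfolding W_def by (intro AE_I2) simp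
    qed
    obtain no where no: "\<And>n. n \<ge> no \<Longrightarrow> norm ((\<integral>y. ?s n y \<partial>lborel) - (\<integral>y. ?f y \<partial>lborel)) < \<epsilon> / 3"
      using LIMSEQ_D[OF dct, of "\<epsilon>/3"] \<epsilon> by auto
    have bF: "\<bar>?I F - (\<integral>y. ?f y \<partial>lborel)\<bar> \<le> \<epsilon> / 3"
      using gF_split_bound[OF g sg L F R T RU[OF FS] less_imp_le[OF e1]] tR by linarith
    have bFn: "\<bar>?I (Fn n) - (\<integral>y. ?s n y \<partial>lborel)\<bar> \<le> \<epsilon> / 3" for n
      using gF_split_bound[OF g sg L Fn R T RU[of "Fn n"] less_imp_le[OF e1]] FnS tR by (meson order.trans)
    show "\<exists>no. \<forall>n\<ge>no. norm (?I (Fn n) - ?I F) < \<epsilon>"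
    proof (intro exI allI impI)
      fix n assume "no \<le> n"
      then have "norm ((\<integral>y. ?s n y \<partial>lborel) - (\<integral>y. ?f y \<partial>lborel)) < \<epsilon> / 3" by (rule no)
      then show "norm (?I (Fn n) - ?I F) < \<epsilon>" using bF bFn[of n]
        unfolding real_norm_def abs_less_iff abs_le_iff by linarith
    qed
  qed
  then have "(\<lambda>n. - ?I (Fn n)) \<longlonglongrightarrow> - ?I F" by (rule tendsto_minus)
  then show "(\<lambda>n. out_entropy \<gamma> \<sigma> L (Fn n)) \<longlonglongrightarrow> out_entropy \<gamma> \<sigma> L F"
    unfolding oe_eq by simp
qed

end


lemma wc_mono: "weakly_continuous_on S H \<Longrightarrow> S' \<subseteq> S \<Longrightarrow> weakly_continuous_on S' H"
  unfolding weakly_continuous_on_def by blast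

context
  fixes \<gamma> \<sigma> L :: real
  assumes g: "0 < \<gamma>" and sg: "0 < \<sigma>" and L: "0 < L"
begin

lemma peak_cont:
  assumes \<rho>: "0 < \<rho>"
  shows "weakly_continuous_on (peak_set \<rho>) (out_entropy \<gamma> \<sigma> L)"
proof (rule core[OF g sg L])
  show "peak_set \<rho> \<subseteq> input_dists" unfolding peak_set_def by auto
  fix e :: real assume e: "0 < e"
  show "\<exists>R\<ge>0. \<forall>F\<in>peak_set \<rho>. UF F R \<le> ennreal e"
  proof (intro exI[of _ \<rho>] conjI ballI)
    show "0 \<le> \<rho>" using \<rho> by simp
    fix F assume F: "F \<in> peak_set \<rho>"
    then have Fi: "F \<in> input_dists" and ae: "AE x in F. fst x \<le> \<rho>" unfolding peak_set_def by auto
    have ae0: "AE x in F. 0 \<le> fst x" by (rule input_distsD(3)[OF Fi])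
    have "UF F \<rho> \<le> (\<integral>\<^sup>+x. 0 \<partial>F)"
      unfolding UF_def[OF g sg L Fi]
      by (rule nn_integral_mono_AE) (use ae ae0 in \<open>auto simp: indicator_def\<close>)
    then show "UF F \<rho> \<le> ennreal e" by simp
  qed
qed

lemma cost_cont:
  assumes A: "0 < A" and adm: "admissible_cost C" and lim: "filterlim (\<lambda>r. C r / r\<^sup>2) at_top at_top"
  shows "weakly_continuous_on (cost_set C A) (out_entropy \<gamma> \<sigma> L)"
proof (rule core[OF g sg L])
  show "cost_set C A \<subseteq> input_dists" unfolding cost_set_def by auto
  have Cnn: "\<And>x. 0 \<le> x \<Longrightarrow> 0 \<le> C x" and Cmono: "mono_on {0..} C"
    using adm unfolding admissible_cost_def by auto
  have mC: "mono (\<lambda>t. C (max 0 t))"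
    by (rule monoI) (auto intro!: mono_onD[OF Cmono] simp: max_def)
  have measC: "(\<lambda>t. C (max 0 t)) \<in> borel_measurable borel" by (rule borel_measurable_mono[OF mC])
  fix e :: real assume e: "0 < e"
  have ev: "eventually (\<lambda>r. 12 * A / e \<le> C r / r\<^sup>2) at_top"
    using lim by (simp add: filterlim_at_top)
  then obtain N where N: "\<And>r. N \<le> r \<Longrightarrow> 12 * A / e \<le> C r / r\<^sup>2"
    unfolding eventually_at_top_linorder by blast
  define R where "R = max N 1"
  have R: "0 \<le> R" "1 \<le> R" "N \<le> R" unfolding R_def by auto
  have key: "8 + 4 * r\<^sup>2 \<le> e / A * C r" if r: "R < r" for r
  proof -
    have r1: "1 \<le> r" and rN: "N \<le> r" using r R by auto
    have r2: "1 \<le> r\<^sup>2" using r1 by (simp add: one_le_power)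
    have "12 * A / e \<le> C r / r\<^sup>2" by (rule N[OF rN])
    then have "12 * A / e * r\<^sup>2 \<le> C r / r\<^sup>2 * r\<^sup>2" by (rule mult_right_mono) simp
    also have "C r / r\<^sup>2 * r\<^sup>2 = C r" using r1 by (simp add: field_simps)
    finally have "12 * A / e * r\<^sup>2 \<le> C r" .
    then have "e / A * (12 * A / e * r\<^sup>2) \<le> e / A * C r" using e A by (intro mult_left_mono) auto
    then have "12 * r\<^sup>2 \<le> e / A * C r" using e A by (simp add: field_simps)
    then show ?thesis using r2 by linarith
  qed
  show "\<exists>R\<ge>0. \<forall>F\<in>cost_set C A. UF F R \<le> ennreal e"
  proof (intro exI[of _ R] conjI ballI)
    show "0 \<le> R" by (rule R(1))
    fix F assume F: "F \<in> cost_set C A"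
    then have Fi: "F \<in> input_dists" and cost: "(\<integral>\<^sup>+ x. ennreal (C (fst x)) \<partial>F) \<le> ennreal A"
      unfolding cost_set_def by auto
    have sF: "sets F = sets borel" by (rule input_distsD(2)[OF Fi])
    have ae0: "AE x in F. 0 \<le> fst x" by (rule input_distsD(3)[OF Fi])
    have mF: "(\<lambda>x. C (max 0 (fst x))) \<in> borel_measurable F"
    proof -
      have "(\<lambda>x::real\<times>real. C (max 0 (fst x))) \<in> borel_measurable borel"
        using measC by measurable
      then show ?thesis by (subst measurable_cong_sets[OF sF refl])
    qed
    have "UF F R \<le> (\<integral>\<^sup>+x. ennreal (e / A) * ennreal (C (max 0 (fst x))) \<partial>F)"
      unfolding UF_def[OF g sg L Fi]
    proof (rule nn_integral_mono_AE)
      show "AE x in F. indicator {x. R < \<bar>fst x\<bar>} x * ennreal (8 + 4 * (fst x)\<^sup>2)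
          \<le> ennreal (e / A) * ennreal (C (max 0 (fst x)))"
        using ae0
      proof eventually_elim
        case (elim x)
        show ?case
        proof (cases "R < \<bar>fst x\<bar>")
          case True
          then have "R < fst x" using elim by simp
          then have "8 + 4 * (fst x)\<^sup>2 \<le> e / A * C (fst x)" by (rule key)
          then have "ennreal (8 + 4 * (fst x)\<^sup>2) \<le> ennreal (e / A * C (fst x))" by (rule ennreal_leI)
          also have "\<dots> = ennreal (e / A) * ennreal (C (fst x))" by (rule ennreal_mult') (use e A in simp)
          finally show ?thesis using True elim by simp
        qed simp
      qed
    qed
    also have "\<dots> = ennreal (e / A) * (\<integral>\<^sup>+x. ennreal (C (max 0 (fst x))) \<partial>F)"
      by (rule nn_integral_cmult) (use mF in measurable)
    also have "(\<integral>\<^sup>+x. ennreal (C (max 0 (fst x))) \<partial>F) = (\<integral>\<^sup>+x. ennreal (C (fst x)) \<partial>F)"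
      by (rule nn_integral_cong_AE) (use ae0 in \<open>auto simp: max_def\<close>)
    also have "ennreal (e / A) * (\<integral>\<^sup>+x. ennreal (C (fst x)) \<partial>F) \<le> ennreal (e / A) * ennreal A"
      by (rule mult_left_mono[OF cost]) simp
    also have "\<dots> = ennreal e" using e A by (simp flip: ennreal_mult')
    finally show "UF F R \<le> ennreal e" .
  qed
qed

end


theorem mainTheorem10:
  fixes \<gamma> \<sigma> L \<rho> A :: real and C C' :: "real \<Rightarrow> real"
  assumes "\<gamma> > 0" "\<sigma> > 0" "L > 0" "\<rho> > 0" "A > 0"
    and "admissible_cost C" "filterlim (\<lambda>r. C r / r\<^sup>2) at_top at_top"
    and "admissible_cost C'" "filterlim (\<lambda>r. C' r / ln r) at_top at_top"
  shows "weakly_continuous_on (peak_set \<rho>) (out_entropy \<gamma> \<sigma> L)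
       \<and> weakly_continuous_on (cost_set C A) (out_entropy \<gamma> \<sigma> L)
       \<and> weakly_continuous_on (peak_set \<rho> \<inter> cost_set C' A) (out_entropy \<gamma> \<sigma> L)"
  proof -
  have P: "weakly_continuous_on (peak_set \<rho>) (out_entropy \<gamma> \<sigma> L)"
    by (rule peak_cont[OF assms(1,2,3,4)])
  have C: "weakly_continuous_on (cost_set C A) (out_entropy \<gamma> \<sigma> L)"
    by (rule cost_cont[OF assms(1,2,3,5,6,7)])
  have P2: "weakly_continuous_on (peak_set \<rho> \<inter> cost_set C' A) (out_entropy \<gamma> \<sigma> L)"
    by (rule wc_mono[OF P]) blast
  show ?thesis using P C P2 by blast
qed

end
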